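(* Let $(X_k^\diamond,U_k^\diamond)_{k\ge0}$ be the trajectory of $X_{k+1}=AX_k+BU_k+EW_k$, $X_0=X_{\mathrm{ini}}$, under $U_k^\diamond=KX_k^\diamond+F\,\mathbb E[W]$ (the overtakingly optimal trajectory of the stochastic infinite-horizon LQ problem). Then the laws $(\mu_{X_k^\diamond},\mu_{U_k^\diamond})$ converge as $k\to\infty$ to $(\mu_X^\diamond,\mu_U^\diamond)$, where $\mu_X^\diamond$ is the law of $$(I-\tilde A)^{-1}\tilde F\,\mathbb E[W]+\sum_{j=0}^\infty\tilde A^jE(W_j-\mathbb E[W])$$ and $\mu_U^\diamond$ is the law of $$\big(K(I-\tilde A)^{-1}\tilde F+F\big)\mathbb E[W]+K\sum_{j=0}^\infty\tilde A^jE(W_j-\mathbb E[W]).$$ The first two moments of $\mu_X^\diamond$ are $\mathbb E[\mu_X^\diamond]=(I-\tilde A)^{-1}\tilde F\,\mathbb E[W]$ and $\Sigma[\mu_X^\diamond]=\sum_{j=0}^\infty\tilde A^jE\Sigma[W]E^\top\tilde A^{j\top}$. Moreover, any $(X,U)$ with $X\sim\mu_X^\diamond$ and $U=KX+F\,\mathbb E[W]$ is a stationary pair of the system.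
   Context: $A\in\mathbb R^{n_x\times n_x}$, $B\in\mathbb R^{n_x\times n_u}$, $E\in\mathbb R^{n_x\times n_w}$; $Q\succeq0$, $R\succ0$; $(A,B)$ stabilizable, $(A,Q^{1/2})$ detectable. $X_{\mathrm{ini}}$ is a square-integrable random vector and $W_0,W_1,\dots$ are i.i.d. square-integrable random vectors, independent of $X_{\mathrm{ini}}$, each distributed as $W$; $\Sigma[\cdot]$ denotes covariance. Stationary quantities: $P$ is the stabilizing symmetric positive semidefinite solution of $P=Q+A^\top(P-PB(R+B^\top PB)^{-1}B^\top P)A$; $K=-(R+B^\top PB)^{-1}B^\top PA$; $\tilde A=A+BK$ (Schur stable); $G$ is the unique solution of $G=\tilde A^\top(PE+G)$; $F=-(R+B^\top PB)^{-1}B^\top(PE+G)$; $\tilde F=BF+E$. The law of a random vector $Z$ is $\mu_Z$, and moments of a law are those of any random vector with that law. Stationary pair: square-integrable $(\bar X,\bar U)$ such that $\bar X$ and $A\bar X+B\bar U+EW'$ have the same distribution, where $W'$ has the law of $W$ and is independent of $(\bar X,\bar U)$. *)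

theory Defs
  imports "HOL-Analysis.Analysis" "HOL-Probability.Probability"
begin

section \<open>Matrices\<close>

text \<open>Matrix power (note: the operator ^ on vec types is componentwise, so we use matrix product).\<close>
fun matpow :: "real^'n^'n \<Rightarrow> nat \<Rightarrow> real^'n^'n" where
  "matpow A 0 = mat 1"
| "matpow A (Suc k) = A ** matpow A k"

definition sym_mat :: "real^'n^'n \<Rightarrow> bool" where
  "sym_mat Q \<longleftrightarrow> transpose Q = Q"

definition psd :: "real^'n^'n \<Rightarrow> bool" where
  "psd Q \<longleftrightarrow> sym_mat Q \<and> (\<forall>x. 0 \<le> x \<bullet> (Q *v x))"

definition pd :: "real^'n^'n \<Rightarrow> bool" where
  "pd Q \<longleftrightarrow> sym_mat Q \<and> (\<forall>x. x \<noteq> 0 \<longrightarrow> 0 < x \<bullet> (Q *v x))"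

text \<open>Principal (PSD) square root of a PSD matrix.\<close>
definition msqrt :: "real^'n^'n \<Rightarrow> real^'n^'n" where
  "msqrt Q = (THE S. psd S \<and> S ** S = Q)"

definition cmat :: "real^'n^'m \<Rightarrow> complex^'n^'m" where
  "cmat A = (\<chi> i j. complex_of_real (A $ i $ j))"

text \<open>Schur stability: every (complex) eigenvalue has modulus < 1.\<close>
definition schur_stable :: "real^'n^'n \<Rightarrow> bool" where
  "schur_stable A \<longleftrightarrow>
     (\<forall>(c::complex) (v::complex^'n). v \<noteq> 0 \<and> cmat A *v v = (\<chi> i. c * v $ i) \<longrightarrow> cmod c < 1)"

definition stabilizable :: "real^'n^'n \<Rightarrow> real^'m^'n \<Rightarrow> bool" where
  "stabilizable A B \<longleftrightarrow> (\<exists>L :: real^'n^'m. schur_stable (A + B ** L))"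

definition detectable :: "real^'n^'n \<Rightarrow> real^'n^'p \<Rightarrow> bool" where
  "detectable A C \<longleftrightarrow> (\<exists>L :: real^'p^'n. schur_stable (A + L ** C))"

section \<open>Laws\<close>

text \<open>Mean and covariance matrix of a law on R^n.\<close>
definition mean_law :: "(real^'n) measure \<Rightarrow> real^'n" where
  "mean_law \<mu> = (\<integral>x. x \<partial>\<mu>)"

definition cov_law :: "(real^'n) measure \<Rightarrow> real^'n^'n" where
  "cov_law \<mu> = (\<chi> i j. \<integral>x. (x $ i - mean_law \<mu> $ i) * (x $ j - mean_law \<mu> $ j) \<partial>\<mu>)"

text \<open>Weak convergence of probability laws on a metric space.\<close>
definition weak_conv_law :: "(nat \<Rightarrow> 'b::metric_space measure) \<Rightarrow> 'b measure \<Rightarrow> bool" where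
  "weak_conv_law \<mu>s \<mu> \<longleftrightarrow>
     (\<forall>f :: 'b \<Rightarrow> real. continuous_on UNIV f \<and> bounded (range f) \<longrightarrow>
        (\<lambda>k. \<integral>x. f x \<partial>\<mu>s k) \<longlonglongrightarrow> (\<integral>x. f x \<partial>\<mu>))"

text \<open>Couplings and squared 2-Wasserstein distance.\<close>
definition couplings :: "'b::{metric_space,second_countable_topology} measure \<Rightarrow> 'b measure \<Rightarrow> ('b \<times> 'b) measure set" where
  "couplings \<mu> \<nu> = {\<pi>. prob_space \<pi> \<and> sets \<pi> = sets (borel \<Otimes>\<^sub>M borel) \<and>
       distr \<pi> borel fst = \<mu> \<and> distr \<pi> borel snd = \<nu>}"

definition wasserstein2_sq :: "'b::{metric_space,second_countable_topology} measure \<Rightarrow> 'b measure \<Rightarrow> ennreal" where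
  "wasserstein2_sq \<mu> \<nu> = (INF \<pi>\<in>couplings \<mu> \<nu>. \<integral>\<^sup>+ p. ennreal ((dist (fst p) (snd p))\<^sup>2) \<partial>\<pi>)"

definition W2_conv_law :: "(nat \<Rightarrow> 'b::{metric_space,second_countable_topology} measure) \<Rightarrow> 'b measure \<Rightarrow> bool" where
  "W2_conv_law \<mu>s \<mu> \<longleftrightarrow> (\<lambda>k. wasserstein2_sq (\<mu>s k) \<mu>) \<longlonglongrightarrow> 0"

section \<open>Stationary pairs\<close>

text \<open>A square-integrable pair (Xb,Ub) on a probability space N is stationary if Xb has the same
  law as A Xb + B Ub + E W', where W' has law muW and is independent of (Xb,Ub); the independent
  copy W' is realised as the second coordinate of the product space N x muW.\<close>
definition stationary_pair ::
  "real^'nx^'nx \<Rightarrow> real^'nu^'nx \<Rightarrow> real^'nw^'nx \<Rightarrow> (real^'nw) measure \<Rightarrow>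
   'b measure \<Rightarrow> ('b \<Rightarrow> real^'nx) \<Rightarrow> ('b \<Rightarrow> real^'nu) \<Rightarrow> bool" where
  "stationary_pair A B E \<mu>W N Xb Ub \<longleftrightarrow>
     Xb \<in> borel_measurable N \<and> Ub \<in> borel_measurable N \<and>
     integrable N (\<lambda>\<omega>. (norm (Xb \<omega>))\<^sup>2) \<and> integrable N (\<lambda>\<omega>. (norm (Ub \<omega>))\<^sup>2) \<and>
     distr N borel Xb =
       distr (N \<Otimes>\<^sub>M \<mu>W) borel (\<lambda>(\<omega>, w). A *v Xb \<omega> + B *v Ub \<omega> + E *v w)"

end

theory Submission imports Defs "Jordan_Normal_Form.Spectral_Radius" begin
no_notation Matrix.vec_index (infixl "$" 100)
hide_const (open) Matrix.mat Matrix.vec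

definition jm :: "(nat \<Rightarrow> 'n) \<Rightarrow> complex^'n^'n \<Rightarrow> complex Matrix.mat" where
  "jm f X = Matrix.mat CARD('n) CARD('n) (\<lambda>(i,j). X $ f i $ f j)"

lemma jm_carrier: "jm f (X::complex^'n^'n) \<in> carrier_mat CARD('n) CARD('n)"
  by (simp add: jm_def)

lemma jm_mult:
  fixes X Y :: "complex^'n^'n"
  assumes f: "bij_betw f {..<CARD('n)} (UNIV::'n set)"
  shows "jm f (X ** Y) = jm f X * jm f Y"
proof (rule eq_matI)
  fix i j assume i: "i < dim_row (jm f X * jm f Y)" and j: "j < dim_col (jm f X * jm f Y)"
  have "(jm f X * jm f Y) $$ (i,j) = (\<Sum>k\<in>{0..<CARD('n)}. X $ f i $ f k * Y $ f k $ f j)"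
    using i j by (simp add: jm_def scalar_prod_def)
  also have "\<dots> = (\<Sum>k\<in>UNIV. X $ f i $ k * Y $ k $ f j)"
    using sum.reindex_bij_betw[OF f, of "\<lambda>k. X $ f i $ k * Y $ k $ f j"]
    by (simp add: atLeast0LessThan)
  finally show "jm f (X ** Y) $$ (i, j) = (jm f X * jm f Y) $$ (i, j)"
    using i j by (simp add: jm_def matrix_matrix_mult_def)
qed (auto simp: jm_def)

lemma jm_one:
  assumes f: "bij_betw f {..<CARD('n)} (UNIV::'n set)"
  shows "jm f (mat 1 :: complex^'n^'n) = 1\<^sub>m CARD('n)"
proof (rule eq_matI)
  fix i j assume i: "i < dim_row (1\<^sub>m CARD('n) :: complex Matrix.mat)" and j: "j < dim_col (1\<^sub>m CARD('n) :: complex Matrix.mat)"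
  have "f i = f j \<longleftrightarrow> i = j" using i j f by (auto simp: bij_betw_def inj_on_def)
  then show "jm f (mat 1) $$ (i, j) = 1\<^sub>m CARD('n) $$ (i, j)"
    using i j by (simp add: jm_def Finite_Cartesian_Product.mat_def)
qed (auto simp: jm_def)

lemma jnf_eig_to_vec:
  fixes X :: "complex^'n^'n"
  assumes f: "bij_betw f {..<CARD('n)} (UNIV::'n set)"
    and ev: "eigenvector (jm f X) v \<mu>"
  shows "\<exists>u. u \<noteq> 0 \<and> X *v u = (\<chi> i. \<mu> * u $ i)"
proof -
  define n where "n = CARD('n)"
  define g where "g = inv_into {..<n} f"
  have fg: "f (g i) = i" for i using f unfolding g_def n_def
    by (meson UNIV_I bij_betw_inv_into_right)
  have gf: "k < n \<Longrightarrow> g (f k) = k" for k using f unfolding g_def n_def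
    by (meson bij_betw_inv_into_left lessThan_iff)
  have gn: "g i < n" for i using f unfolding g_def n_def
    by (meson UNIV_I bij_betwE bij_betw_inv_into lessThan_iff)
  from ev have vc: "v \<in> carrier_vec n" and v0: "v \<noteq> 0\<^sub>v n" and eq: "jm f X *\<^sub>v v = \<mu> \<cdot>\<^sub>v v"
    unfolding eigenvector_def by (auto simp: jm_def n_def)
  define u where "u = (\<chi> i. Matrix.vec_index v (g i))"
  have "X *v u = (\<chi> i. \<mu> * u $ i)"
  proof (subst Finite_Cartesian_Product.vec_eq_iff, intro allI)
    fix i
    have "(X *v u) $ i = (\<Sum>j\<in>UNIV. X $ i $ j * Matrix.vec_index v (g j))"
      by (simp add: matrix_vector_mult_def u_def)
    also have "\<dots> = (\<Sum>k\<in>{..<n}. X $ i $ f k * Matrix.vec_index v (g (f k)))"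
      using sum.reindex_bij_betw[OF f, of "\<lambda>j. X $ i $ j * Matrix.vec_index v (g j)"]
      by (simp add: n_def)
    also have "\<dots> = (\<Sum>k\<in>{..<n}. X $ i $ f k * Matrix.vec_index v k)"
      by (rule sum.cong) (auto simp: gf)
    also have "\<dots> = Matrix.vec_index (jm f X *\<^sub>v v) (g i)"
      using gn[of i] vc by (simp add: jm_def n_def scalar_prod_def fg atLeast0LessThan)
    also have "\<dots> = \<mu> * u $ i"
      using eq gn[of i] vc by (simp add: u_def)
    finally show "(X *v u) $ i = (\<chi> i. \<mu> * u $ i) $ i" by simp
  qed
  moreover have "u \<noteq> 0"
  proof
    assume u0: "u = 0"
    have "v = 0\<^sub>v n"
    proof (rule eq_vecI)
      fix k assume "k < dim_vec (0\<^sub>v n :: complex Matrix.vec)"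
      then have k: "k < n" by simp
      have "Matrix.vec_index v k = u $ f k" by (simp add: u_def gf[OF k])
      then show "Matrix.vec_index v k = Matrix.vec_index (0\<^sub>v n) k" using u0 k by simp
    qed (use vc in simp)
    with v0 show False by simp
  qed
  ultimately show ?thesis by blast
qed

lemma matpow_Suc_right: "matpow X (Suc k) = matpow X k ** X"
  by (induction k) (simp_all add: matrix_mul_assoc)

lemma cmat_mult: "cmat ((X::real^'n^'m) ** (Y::real^'k^'n)) = cmat X ** cmat Y"
  by (simp add: cmat_def matrix_matrix_mult_def Finite_Cartesian_Product.vec_eq_iff)

lemma cmat_one: "cmat (mat 1 :: real^'n^'n) = mat 1"
  by (simp add: cmat_def Finite_Cartesian_Product.mat_def Finite_Cartesian_Product.vec_eq_iff)

lemma matpow_scaleR: "matpow (c *\<^sub>R X) k = c ^ k *\<^sub>R matpow X k"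
  by (induction k) (simp_all add: matrix_scalar_ac scalar_matrix_assoc[symmetric])

lemma jm_matpow:
  fixes X :: "real^'n^'n"
  assumes f: "bij_betw f {..<CARD('n)} (UNIV::'n set)"
  shows "jm f (cmat (matpow X k)) = (jm f (cmat X)) ^\<^sub>m k"
proof (induction k)
  case 0
  show ?case by (simp add: cmat_one jm_one[OF f]) (simp add: jm_def)
next
  case (Suc k)
  show ?case by (simp only: matpow_Suc_right cmat_mult jm_mult[OF f] Suc pow_mat.simps)
qed

lemma schur_bound:
  fixes X :: "real^'n^'n"
  assumes st: "schur_stable X"
  shows "\<exists>C r. 0 < r \<and> r < 1 \<and> (\<forall>k i j. \<bar>matpow X k $ i $ j\<bar> \<le> C * r ^ k)"
proof -
  define n where "n = CARD('n)"
  have n0: "n > 0" by (simp add: n_def)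
  obtain f where f0: "bij_betw f {0..<n} (UNIV::'n set)"
    using ex_bij_betw_nat_finite[of "UNIV::'n set"] by (auto simp: n_def)
  then have f: "bij_betw f {..<CARD('n)} (UNIV::'n set)" by (simp add: atLeast0LessThan n_def)
  define A0 where "A0 = jm f (cmat X)"
  have A0c: "A0 \<in> carrier_mat n n" by (simp add: A0_def jm_carrier n_def)
  define \<rho> where "\<rho> = spectral_radius A0"
  obtain \<mu> where \<mu>: "\<mu> \<in> spectrum A0" and \<rho>\<mu>: "\<rho> = norm \<mu>"
    using spectral_radius_mem_max(1)[OF A0c n0] unfolding \<rho>_def by auto
  from \<mu> obtain v where "eigenvector A0 v \<mu>" unfolding spectrum_def eigenvalue_def by auto
  from jnf_eig_to_vec[OF f this[unfolded A0_def]] st have "cmod \<mu> < 1"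
    unfolding schur_stable_def by blast
  then have \<rho>1: "\<rho> < 1" using \<rho>\<mu> by simp
  have \<rho>0: "0 \<le> \<rho>" using \<rho>\<mu> by simp
  define r where "r = (1 + \<rho>) / 2"
  have r0: "0 < r" and r1: "r < 1" and \<rho>r: "\<rho> < r" using \<rho>0 \<rho>1 by (auto simp: r_def)
  define X' where "X' = (1/r) *\<^sub>R X"
  define A1 where "A1 = jm f (cmat X')"
  have A1c: "A1 \<in> carrier_mat n n" by (simp add: A1_def jm_carrier n_def)
  have sr1: "spectral_radius A1 < 1"
  proof -
    obtain \<nu> where \<nu>: "\<nu> \<in> spectrum A1" and \<nu>n: "spectral_radius A1 = norm \<nu>"
      using spectral_radius_mem_max(1)[OF A1c n0] by auto
    from \<nu> obtain v where ev: "eigenvector A1 v \<nu>" unfolding spectrum_def eigenvalue_def by auto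
    then have vc: "v \<in> carrier_vec n" and v0: "v \<noteq> 0\<^sub>v n" and eq: "A1 *\<^sub>v v = \<nu> \<cdot>\<^sub>v v"
      unfolding eigenvector_def using A1c by auto
    have "A0 *\<^sub>v v = (of_real r * \<nu>) \<cdot>\<^sub>v v"
    proof (rule eq_vecI)
      fix i assume "i < dim_vec ((of_real r * \<nu>) \<cdot>\<^sub>v v)"
      then have i: "i < n" using vc by simp
      have "Matrix.vec_index (A0 *\<^sub>v v) i = of_real r * Matrix.vec_index (A1 *\<^sub>v v) i"
        using i vc r0 by (simp add: A0_def A1_def jm_def scalar_prod_def cmat_def X'_def n_def sum_distrib_left)
      also have "\<dots> = Matrix.vec_index ((of_real r * \<nu>) \<cdot>\<^sub>v v) i"
        using eq i vc by simp
      finally show "Matrix.vec_index (A0 *\<^sub>v v) i = Matrix.vec_index ((of_real r * \<nu>) \<cdot>\<^sub>v v) i" .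
    qed (use A0c vc in simp)
    then have "eigenvector A0 v (of_real r * \<nu>)"
      using vc v0 A0c unfolding eigenvector_def by simp
    then have "norm (of_real r * \<nu>) \<in> norm ` spectrum A0"
      unfolding spectrum_def eigenvalue_def by auto
    from spectral_radius_mem_max(2)[OF A0c n0 this] have "r * norm \<nu> \<le> \<rho>"
      using r0 by (simp add: \<rho>_def norm_mult)
    then have "r * norm \<nu> < r * 1" using \<rho>r by simp
    then have "norm \<nu> < 1" using r0 by (simp only: mult_less_cancel_left_pos)
    then show ?thesis using \<nu>n by simp
  qed
  obtain c where c: "\<And>k. norm_bound (A1 ^\<^sub>m k) c"
    using spectral_radius_jnf_norm_bound_less_1_upper_triangular[OF A1c sr1] by auto
  define g where "g = inv_into {..<n} f"
  have fg: "f (g i) = i" for i using f unfolding g_def n_def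
    by (meson UNIV_I bij_betw_inv_into_right)
  have gn: "g i < n" for i using f unfolding g_def n_def
    by (meson UNIV_I bij_betwE bij_betw_inv_into lessThan_iff)
  have "\<bar>matpow X k $ i $ j\<bar> \<le> c * r ^ k" for k i j
  proof -
    have pw: "A1 ^\<^sub>m k = jm f (cmat (matpow X' k))"
      unfolding A1_def by (rule jm_matpow[OF f, symmetric])
    have "norm ((A1 ^\<^sub>m k) $$ (g i, g j)) \<le> c"
      using c[of k] gn A1c unfolding norm_bound_def by auto
    moreover have "(A1 ^\<^sub>m k) $$ (g i, g j) = of_real ((1/r)^k * matpow X k $ i $ j)"
      unfolding pw using gn by (simp add: jm_def fg cmat_def X'_def matpow_scaleR n_def)
    ultimately have "(1/r)^k * \<bar>matpow X k $ i $ j\<bar> \<le> c"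
      using r0 by (simp add: abs_mult norm_mult norm_power norm_divide)
    then have "r^k * ((1/r)^k * \<bar>matpow X k $ i $ j\<bar>) \<le> r^k * c"
      by (rule mult_left_mono) (use r0 in simp)
    then show ?thesis using r0 by (simp add: power_one_over mult.commute)
  qed
  then show ?thesis using r0 r1 by blast
qed



definition mnorm :: "real^'n^'m \<Rightarrow> real" where
  "mnorm X = (\<Sum>i\<in>UNIV. \<Sum>j\<in>UNIV. \<bar>X $ i $ j\<bar>)"

lemma mnorm_nonneg: "0 \<le> mnorm X"
  unfolding mnorm_def by (intro sum_nonneg) auto

lemma norm_mv_le: "norm (X *v x) \<le> mnorm X * norm x"
proof -
  have "norm (X *v x) \<le> onorm ((*v) X) * norm x"
    by (rule onorm) simp
  also have "\<dots> \<le> mnorm X * norm x"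
    unfolding mnorm_def by (intro mult_right_mono onorm_le_matrix_component_sum) auto
  finally show ?thesis .
qed

lemma mv_meas[measurable]:
  fixes A :: "real^'n^'m"
  assumes "f \<in> borel_measurable N"
  shows "(\<lambda>x. A *v f x) \<in> borel_measurable N"
proof -
  have "((*v) A) \<in> borel_measurable borel"
    by (intro borel_measurable_continuous_onI linear_continuous_on) simp
  from measurable_compose[OF assms this] show ?thesis by (simp add: comp_def)
qed

lemma vn_meas[measurable]:
  fixes f :: "'b \<Rightarrow> real^'n"
  assumes "f \<in> borel_measurable N"
  shows "(\<lambda>x. f x $ i) \<in> borel_measurable N"
proof -
  have "(\<lambda>v::real^'n. v $ i) \<in> borel_measurable borel"
    by (intro borel_measurable_continuous_onI linear_continuous_on bounded_linear_vec_nth)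
  from measurable_compose[OF assms this] show ?thesis by simp
qed

lemma ennreal_suminf_sq:
  fixes x :: "nat \<Rightarrow> ennreal"
  shows "(\<Sum>j. x j)^2 = (\<Sum>j. \<Sum>l. x j * x l)"
  by (simp add: power2_eq_square ennreal_suminf_cmult ennreal_suminf_multc)

lemma G_bound:
  fixes f :: "nat \<Rightarrow> 'a \<Rightarrow> real" and b :: "nat \<Rightarrow> real"
  assumes meas: "\<And>j. f j \<in> borel_measurable M"
    and nn: "\<And>j \<omega>. 0 \<le> f j \<omega>"
    and sq: "\<And>j. (\<integral>\<^sup>+ \<omega>. ennreal ((f j \<omega>)^2) \<partial>M) \<le> s"
    and b0: "\<And>j. 0 \<le> b j"
  shows "(\<integral>\<^sup>+ \<omega>. (\<Sum>j. ennreal (b j * f j \<omega>))^2 \<partial>M) \<le> (\<Sum>j. ennreal (b j))^2 * s"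
proof -
  have cross: "(\<integral>\<^sup>+ \<omega>. ennreal (b j * f j \<omega>) * ennreal (b l * f l \<omega>) \<partial>M) \<le> ennreal (b j) * ennreal (b l) * s" for j l
  proof -
    have "(\<integral>\<^sup>+ \<omega>. ennreal (b j * f j \<omega>) * ennreal (b l * f l \<omega>) \<partial>M)
        \<le> (\<integral>\<^sup>+ \<omega>. ennreal (b j * b l) * (ennreal (1/2) * (ennreal ((f j \<omega>)^2) + ennreal ((f l \<omega>)^2))) \<partial>M)"
    proof (rule nn_integral_mono)
      fix \<omega>
      have "f j \<omega> * f l \<omega> \<le> 1/2 * ((f j \<omega>)^2 + (f l \<omega>)^2)"
        using sum_squares_bound[of "f j \<omega>" "f l \<omega>"] by (simp add: power2_eq_square)
      then have "b j * b l * (f j \<omega> * f l \<omega>) \<le> b j * b l * (1/2 * ((f j \<omega>)^2 + (f l \<omega>)^2))"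
        using b0 by (intro mult_left_mono) auto
      then have "ennreal (b j * b l * (f j \<omega> * f l \<omega>)) \<le> ennreal (b j * b l * (1/2 * ((f j \<omega>)^2 + (f l \<omega>)^2)))"
        by (rule ennreal_leI)
      moreover have "ennreal (b j * f j \<omega>) * ennreal (b l * f l \<omega>) = ennreal (b j * b l * (f j \<omega> * f l \<omega>))"
        using b0 nn by (simp add: ennreal_mult mult_ac)
      moreover have "ennreal (b j * b l * (1/2 * ((f j \<omega>)^2 + (f l \<omega>)^2))) = ennreal (b j * b l) * (ennreal (1/2) * (ennreal ((f j \<omega>)^2) + ennreal ((f l \<omega>)^2)))"
      proof -
        have h1: "0 \<le> b j * b l" using b0 by simp
        have h2: "0 \<le> (1::real)/2" by simp
        have h5: "0 \<le> (f j \<omega>)^2" "0 \<le> (f l \<omega>)^2" by simp_all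
        then have h3: "0 \<le> (f j \<omega>)^2 + (f l \<omega>)^2" by simp
        then have h4: "0 \<le> 1/2 * ((f j \<omega>)^2 + (f l \<omega>)^2)" by simp
        show ?thesis
          by (simp only: ennreal_mult[OF h1 h4] ennreal_mult[OF h2 h3] ennreal_plus[OF h5])
      qed
      ultimately show "ennreal (b j * f j \<omega>) * ennreal (b l * f l \<omega>) \<le> ennreal (b j * b l) * (ennreal (1/2) * (ennreal ((f j \<omega>)^2) + ennreal ((f l \<omega>)^2)))"
        by simp
    qed
    also have "\<dots> = ennreal (b j * b l) * (ennreal (1/2) * ((\<integral>\<^sup>+ \<omega>. ennreal ((f j \<omega>)^2) \<partial>M) + (\<integral>\<^sup>+ \<omega>. ennreal ((f l \<omega>)^2) \<partial>M)))"
      using meas by (simp add: nn_integral_cmult nn_integral_add)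
    also have "\<dots> \<le> ennreal (b j * b l) * (ennreal (1/2) * (s + s))"
      by (intro mult_left_mono add_mono sq) auto
    also have "ennreal (1/2) * (s + s) = s"
    proof -
      have "ennreal (1/2) * (s + s) = (ennreal (1/2) + ennreal (1/2)) * s"
        by (simp add: distrib_left distrib_right)
      also have "ennreal (1/2) + ennreal (1/2) = ennreal (1/2 + 1/2)"
        by (rule ennreal_plus[symmetric]) auto
      also have "\<dots> = 1" by simp
      finally show ?thesis by simp
    qed
    finally show ?thesis using b0 by (simp add: ennreal_mult)
  qed
  have m1: "\<And>j l. (\<lambda>\<omega>. ennreal (b j * f j \<omega>) * ennreal (b l * f l \<omega>)) \<in> borel_measurable M"
    using meas by measurable
  have "(\<integral>\<^sup>+ \<omega>. (\<Sum>j. ennreal (b j * f j \<omega>))^2 \<partial>M)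
      = (\<integral>\<^sup>+ \<omega>. (\<Sum>j. \<Sum>l. ennreal (b j * f j \<omega>) * ennreal (b l * f l \<omega>)) \<partial>M)"
    by (simp only: ennreal_suminf_sq)
  also have "\<dots> = (\<Sum>j. \<integral>\<^sup>+ \<omega>. (\<Sum>l. ennreal (b j * f j \<omega>) * ennreal (b l * f l \<omega>)) \<partial>M)"
    by (rule nn_integral_suminf) (use meas in measurable)
  also have "\<dots> = (\<Sum>j. \<Sum>l. \<integral>\<^sup>+ \<omega>. ennreal (b j * f j \<omega>) * ennreal (b l * f l \<omega>) \<partial>M)"
    by (intro suminf_cong nn_integral_suminf m1)
  also have "\<dots> \<le> (\<Sum>j. \<Sum>l. ennreal (b j) * ennreal (b l) * s)"
    by (intro suminf_le allI cross) auto
  also have "\<dots> = (\<Sum>j. ennreal (b j))^2 * s"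
    by (simp add: ennreal_suminf_sq ennreal_suminf_multc)
  finally show ?thesis .
qed


lemma distr_pair_snd':
  assumes "prob_space M1" "sigma_finite_measure M2"
  shows "distr (M1 \<Otimes>\<^sub>M M2) M2 snd = M2"
proof (intro measure_eqI)
  interpret M1: prob_space M1 by fact
  interpret M2: sigma_finite_measure M2 by fact
  fix A assume A: "A \<in> sets (distr (M1 \<Otimes>\<^sub>M M2) M2 snd)"
  from A have "emeasure (distr (M1 \<Otimes>\<^sub>M M2) M2 snd) A = emeasure (M1 \<Otimes>\<^sub>M M2) (space M1 \<times> A)"
    by (auto simp add: emeasure_distr space_pair_measure dest: sets.sets_into_space intro!: arg_cong2[where f=emeasure])
  with A show "emeasure (distr (M1 \<Otimes>\<^sub>M M2) M2 snd) A = emeasure M2 A"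
    by (simp add: M2.emeasure_pair_measure_Times M1.emeasure_space_1)
qed simp

lemma sq3: "0 \<le> a \<Longrightarrow> 0 \<le> b \<Longrightarrow> 0 \<le> c \<Longrightarrow> 0 \<le> d \<Longrightarrow> d \<le> a + b + c \<Longrightarrow>
    d^2 \<le> 3 * a^2 + 3 * b^2 + 3 * (c::real)^2"
proof -
  assume h: "0 \<le> a" "0 \<le> b" "0 \<le> c" "0 \<le> d" "d \<le> a + b + c"
  then have "d^2 \<le> (a + b + c)^2" by (intro power_mono) auto
  also have "\<dots> \<le> 3 * a^2 + 3 * b^2 + 3 * c^2"
    using zero_le_power2[of "a - b"] zero_le_power2[of "a - c"] zero_le_power2[of "b - c"]
    by (simp add: power2_eq_square algebra_simps)
  finally show ?thesis .
qed

locale lqs = prob_space M for M :: "'a measure" +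
  fixes W :: "nat \<Rightarrow> 'a \<Rightarrow> real^'nw"
  assumes W_meas[measurable]: "\<And>k. W k \<in> borel_measurable M"
    and W_L2: "\<And>k. integrable M (\<lambda>\<omega>. (norm (W k \<omega>))\<^sup>2)"
    and W_ident: "\<And>k. distr M borel (W k) = distr M borel (W 0)"
    and W_indep: "indep_vars (\<lambda>_. borel) W UNIV"
begin

definition "m = (\<integral>\<omega>. W 0 \<omega> \<partial>M)"
definition "\<mu>W = distr M borel (W 0)"
definition "\<Omega> = PiM UNIV (\<lambda>_::nat. \<mu>W)"
abbreviation "PB \<equiv> PiM UNIV (\<lambda>_::nat. (borel :: (real^'nw) measure))"
definition "Wseq \<omega> = (\<lambda>j. W j \<omega>)"
definition "\<sigma>2 = (\<integral>\<^sup>+ \<omega>. ennreal ((norm (W 0 \<omega> - m))^2) \<partial>M)"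

lemma sets_\<mu>W[simp, measurable_cong]: "sets \<mu>W = sets borel"
  by (simp add: \<mu>W_def)

lemma space_\<mu>W[simp]: "space \<mu>W = UNIV"
  by (simp add: \<mu>W_def)

lemma prob_\<mu>W: "prob_space \<mu>W"
  unfolding \<mu>W_def by (rule prob_space_distr) simp

lemma sets_\<Omega>[measurable_cong]: "sets \<Omega> = sets PB"
  unfolding \<Omega>_def by (rule sets_PiM_cong) auto

lemma space_\<Omega>[simp]: "space \<Omega> = UNIV"
  by (simp add: \<Omega>_def space_PiM)

lemma prob_\<Omega>: "prob_space \<Omega>"
  unfolding \<Omega>_def using prob_\<mu>W by (intro prob_space_PiM) auto

lemma Wseq_meas[measurable]: "Wseq \<in> measurable M PB"
  unfolding Wseq_def by (rule measurable_PiM_single') auto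

lemma Wseq_meas\<Omega>: "Wseq \<in> measurable M \<Omega>"
  using Wseq_meas by (simp cong: measurable_cong_sets add: sets_\<Omega>)

lemma distr_Wseq: "distr M PB Wseq = \<Omega>"
proof -
  have "distr M PB (\<lambda>x. \<lambda>i\<in>UNIV. W i x) = (\<Pi>\<^sub>M i\<in>UNIV. distr M borel (W i))"
    using indep_vars_iff_distr_eq_PiM'[where I=UNIV and M'="\<lambda>_. borel" and X=W] W_indep by simp
  moreover have "(\<Pi>\<^sub>M i\<in>UNIV. distr M borel (W i)) = \<Omega>"
    unfolding \<Omega>_def \<mu>W_def by (rule PiM_cong) (auto intro: W_ident)
  ultimately show ?thesis
    by (simp add: Wseq_def[abs_def] restrict_UNIV)
qed

lemma distr_Wseq\<Omega>: "distr M \<Omega> Wseq = \<Omega>"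
  using distr_Wseq by (metis distr_cong sets_\<Omega>)

lemma W_integrable: "integrable M (W j)"
proof (rule Bochner_Integration.integrable_bound[of _ "\<lambda>\<omega>. 1 + (norm (W j \<omega>))\<^sup>2"])
  show "integrable M (\<lambda>\<omega>. 1 + (norm (W j \<omega>))\<^sup>2)" using W_L2 by simp
  show "AE \<omega> in M. norm (W j \<omega>) \<le> norm (1 + (norm (W j \<omega>))\<^sup>2)"
  proof (rule AE_I2)
    fix \<omega>
    have "0 \<le> (norm (W j \<omega>) - 1)\<^sup>2" by simp
    then have "2 * norm (W j \<omega>) \<le> 1 + (norm (W j \<omega>))\<^sup>2"
      unfolding power2_diff by (simp add: field_simps)
    then have "norm (W j \<omega>) \<le> 1 + (norm (W j \<omega>))\<^sup>2"
      using norm_ge_zero[of "W j \<omega>"] by linarith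
    then show "norm (W j \<omega>) \<le> norm (1 + (norm (W j \<omega>))\<^sup>2)" by simp
  qed
qed simp

lemma W_integral: "(\<integral>\<omega>. W j \<omega> \<partial>M) = m"
proof -
  have "(\<integral>\<omega>. W j \<omega> \<partial>M) = (\<integral>x. x \<partial>distr M borel (W j))"
    by (simp add: integral_distr)
  also have "\<dots> = (\<integral>x. x \<partial>distr M borel (W 0))" by (simp only: W_ident[of j])
  also have "\<dots> = m" by (simp add: integral_distr m_def)
  finally show ?thesis .
qed

lemma nn_W_ident:
  assumes [measurable]: "g \<in> borel_measurable borel"
  shows "(\<integral>\<^sup>+ \<omega>. g (W j \<omega>) \<partial>M) = (\<integral>\<^sup>+ \<omega>. g (W 0 \<omega>) \<partial>M)"
proof -
  have "(\<integral>\<^sup>+ \<omega>. g (W j \<omega>) \<partial>M) = (\<integral>\<^sup>+ x. g x \<partial>distr M borel (W j))"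
    by (simp add: nn_integral_distr)
  also have "\<dots> = (\<integral>\<^sup>+ x. g x \<partial>distr M borel (W 0))" by (simp only: W_ident[of j])
  also have "\<dots> = (\<integral>\<^sup>+ \<omega>. g (W 0 \<omega>) \<partial>M)" by (simp add: nn_integral_distr)
  finally show ?thesis .
qed

lemma \<sigma>2_j: "(\<integral>\<^sup>+ \<omega>. ennreal ((norm (W j \<omega> - m))^2) \<partial>M) = \<sigma>2"
  unfolding \<sigma>2_def by (rule nn_W_ident[of "\<lambda>x. ennreal ((norm (x - m))^2)"]) measurable

lemma \<sigma>2_fin: "\<sigma>2 < \<infinity>"
proof -
  have int: "integrable M (\<lambda>\<omega>. 2 * (norm (W 0 \<omega>))\<^sup>2 + 2 * (norm m)^2)"
    using W_L2 by simp
  have "\<sigma>2 \<le> (\<integral>\<^sup>+ \<omega>. ennreal (2 * (norm (W 0 \<omega>))\<^sup>2 + 2 * (norm m)^2) \<partial>M)"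
    unfolding \<sigma>2_def
  proof (rule nn_integral_mono, rule ennreal_leI)
    fix \<omega>
    have "norm (W 0 \<omega> - m) \<le> norm (W 0 \<omega>) + norm m" by (rule norm_triangle_ineq4)
    then have "(norm (W 0 \<omega> - m))^2 \<le> (norm (W 0 \<omega>) + norm m)^2"
      by (simp add: power_mono)
    also have "\<dots> \<le> 2 * (norm (W 0 \<omega>))\<^sup>2 + 2 * (norm m)^2"
      using zero_le_power2[of "norm (W 0 \<omega>) - norm m"] unfolding power2_sum power2_diff by linarith
    finally show "(norm (W 0 \<omega> - m))^2 \<le> 2 * (norm (W 0 \<omega>))\<^sup>2 + 2 * (norm m)^2" .
  qed
  also have "\<dots> < \<infinity>"
    using integrableD(2)[OF int] by (simp add: top.not_eq_extremum)
  finally show ?thesis .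
qed




lemma distr_perm:
  assumes "inj \<sigma>"
  shows "distr \<Omega> \<Omega> (\<lambda>\<omega>. \<omega> \<circ> \<sigma>) = \<Omega>"
proof -
  have "distr (PiM UNIV (\<lambda>_::nat. \<mu>W)) (PiM UNIV (\<lambda>i. (\<lambda>_. \<mu>W) (\<sigma> i))) (\<lambda>\<omega>. \<lambda>n\<in>UNIV. \<omega> (\<sigma> n))
      = PiM UNIV (\<lambda>i. (\<lambda>_. \<mu>W) (\<sigma> i))"
    by (rule distr_PiM_reindex) (use assms prob_\<mu>W in auto)
  then show ?thesis by (simp add: \<Omega>_def restrict_UNIV comp_def)
qed

lemma distr_shift: "distr (\<Omega> \<Otimes>\<^sub>M \<mu>W) \<Omega> (\<lambda>(\<omega>, w). case_nat w \<omega>) = \<Omega>"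
proof -
  interpret W: prob_space \<mu>W by (rule prob_\<mu>W)
  interpret O: prob_space \<Omega> by (rule prob_\<Omega>)
  interpret WO: pair_sigma_finite \<mu>W \<Omega> ..
  define I1 where "I1 = {Suc 0..}"
  define \<Omega>1 where "\<Omega>1 = PiM I1 (\<lambda>_. \<mu>W)"
  define R where "R = (\<lambda>\<omega>::nat \<Rightarrow> real^'nw. \<lambda>n\<in>I1. \<omega> (n - 1))"
  have ins: "insert 0 I1 = UNIV" by (auto simp: I1_def)
  have s1: "distr \<Omega> \<Omega>1 R = \<Omega>1"
  proof -
    have "distr (PiM UNIV (\<lambda>_::nat. \<mu>W)) (PiM I1 (\<lambda>i. (\<lambda>_. \<mu>W) (i - 1))) (\<lambda>\<omega>. \<lambda>n\<in>I1. \<omega> (n - 1))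
        = PiM I1 (\<lambda>i. (\<lambda>_. \<mu>W) (i - 1))"
      by (rule distr_PiM_reindex) (auto simp: I1_def inj_on_def prob_\<mu>W)
    then show ?thesis by (simp add: \<Omega>_def \<Omega>1_def R_def)
  qed
  have Rm: "R \<in> measurable \<Omega> \<Omega>1"
    unfolding R_def \<Omega>1_def \<Omega>_def by measurable
  have p1: "prob_space \<Omega>1" unfolding \<Omega>1_def using prob_\<mu>W by (intro prob_space_PiM) auto
  then interpret O1: prob_space \<Omega>1 .
  have s2: "\<mu>W \<Otimes>\<^sub>M \<Omega>1 = distr (\<mu>W \<Otimes>\<^sub>M \<Omega>) (\<mu>W \<Otimes>\<^sub>M \<Omega>1) (\<lambda>(x, y). (x, R y))"
  proof -
    have "distr \<mu>W \<mu>W (\<lambda>x. x) \<Otimes>\<^sub>M distr \<Omega> \<Omega>1 R = distr (\<mu>W \<Otimes>\<^sub>M \<Omega>) (\<mu>W \<Otimes>\<^sub>M \<Omega>1) (\<lambda>(x, y). (x, R y))"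
      by (rule pair_measure_distr) (auto simp: s1 Rm intro: O1.sigma_finite_measure_axioms)
    then show ?thesis by (simp add: s1)
  qed
  have s3: "\<mu>W \<Otimes>\<^sub>M \<Omega> = distr (\<Omega> \<Otimes>\<^sub>M \<mu>W) (\<mu>W \<Otimes>\<^sub>M \<Omega>) (\<lambda>(x, y). (y, x))"
    by (rule WO.distr_pair_swap)
  have s4: "distr (\<mu>W \<Otimes>\<^sub>M \<Omega>1) \<Omega> (\<lambda>(x, X). X(0 := x)) = \<Omega>"
  proof -
    have "distr ((\<lambda>_. \<mu>W) 0 \<Otimes>\<^sub>M (\<Pi>\<^sub>M i\<in>I1. (\<lambda>_. \<mu>W) i)) (\<Pi>\<^sub>M i\<in>insert 0 I1. (\<lambda>_. \<mu>W) i) (\<lambda>(x, X). X(0 := x)) =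
        (\<Pi>\<^sub>M i\<in>insert 0 I1. (\<lambda>_. \<mu>W) i)"
      by (rule distr_pair_PiM_eq_PiM) (auto simp: prob_\<mu>W)
    then show ?thesis by (simp add: ins \<Omega>_def \<Omega>1_def)
  qed
  have um: "(\<lambda>(x, X). X(0 := x)) \<in> measurable (\<mu>W \<Otimes>\<^sub>M \<Omega>1) \<Omega>"
  proof -
    have "(\<lambda>p. (snd p) (0 := fst p)) \<in> measurable (\<mu>W \<Otimes>\<^sub>M \<Omega>1) (PiM (I1 \<union> {0}) (\<lambda>_. \<mu>W))"
      by (rule measurable_fun_upd[where J=I1]) (auto simp: \<Omega>1_def)
    moreover have "I1 \<union> {0} = UNIV" using ins by auto
    ultimately show ?thesis by (simp add: \<Omega>_def case_prod_beta')
  qed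
  have idR: "(\<lambda>(x, y). (x, R y)) \<in> measurable (\<mu>W \<Otimes>\<^sub>M \<Omega>) (\<mu>W \<Otimes>\<^sub>M \<Omega>1)"
    using Rm by measurable
  have sw: "(\<lambda>(x, y). (y, x)) \<in> measurable (\<Omega> \<Otimes>\<^sub>M \<mu>W) (\<mu>W \<Otimes>\<^sub>M \<Omega>)"
    by measurable
  have "\<Omega> = distr (distr (distr (\<Omega> \<Otimes>\<^sub>M \<mu>W) (\<mu>W \<Otimes>\<^sub>M \<Omega>) (\<lambda>(x, y). (y, x)))
      (\<mu>W \<Otimes>\<^sub>M \<Omega>1) (\<lambda>(x, y). (x, R y))) \<Omega> (\<lambda>(x, X). X(0 := x))"
    using s2 s3 s4 by simp
  also have "\<dots> = distr (\<Omega> \<Otimes>\<^sub>M \<mu>W) \<Omega> ((\<lambda>(x, X). X(0 := x)) \<circ> ((\<lambda>(x, y). (x, R y)) \<circ> (\<lambda>(x, y). (y, x))))"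
    by (simp add: distr_distr[OF um] distr_distr[OF idR sw] measurable_comp[OF sw idR])
  also have "(\<lambda>(x, X). X(0 := x)) \<circ> ((\<lambda>(x, y). (x, R y)) \<circ> (\<lambda>(x, y). (y, x))) = (\<lambda>(\<omega>, w). case_nat w \<omega>)"
    by (auto simp: fun_eq_iff R_def I1_def split: nat.split)
  finally show ?thesis ..
qed

end

locale lqs2 = lqs M W for M :: "'a measure" and W :: "nat \<Rightarrow> 'a \<Rightarrow> real^'nw" +
  fixes At :: "real^'nx^'nx" and E :: "real^'nw^'nx" and Ft :: "real^'nw^'nx" and C r :: real
  assumes r0: "0 < r" and r1: "r < 1" and C0: "0 \<le> C"
    and geo: "\<And>k x. norm (matpow At k *v x) \<le> C * r^k * norm x"
    and inv: "invertible (mat 1 - At)"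
begin

definition "b j = C * r^j * mnorm E"
definition "SS \<omega> = (\<Sum>j. matpow At j *v (E *v (\<omega> j - m)))"
definition "Minv = matrix_inv (mat 1 - At)"
definition "cc = Minv ** Ft *v m"
definition "\<Phi> \<omega> = cc + SS \<omega>"
definition "good \<omega> \<longleftrightarrow> summable (\<lambda>j. b j * norm (\<omega> j - m))"

lemma b_nonneg: "0 \<le> b j"
  unfolding b_def using C0 r0 mnorm_nonneg[of E] by simp

lemma b_sums: "(\<lambda>j. b (j + k)) sums (C * mnorm E * r^k / (1 - r))"
proof -
  have "(\<lambda>j. r^j) sums (1 / (1 - r))" using geometric_sums[of r] r0 r1 by simp
  then have "(\<lambda>j. (C * mnorm E * r^k) * r^j) sums ((C * mnorm E * r^k) * (1 / (1 - r)))"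
    by (rule sums_mult)
  then show ?thesis by (simp add: b_def power_add mult_ac)
qed

lemma term_bound: "norm (matpow At j *v (E *v v)) \<le> b j * norm v"
proof -
  have "norm (matpow At j *v (E *v v)) \<le> C * r^j * norm (E *v v)" by (rule geo)
  also have "\<dots> \<le> C * r^j * (mnorm E * norm v)"
    using C0 r0 by (intro mult_left_mono norm_mv_le) auto
  finally show ?thesis by (simp add: b_def mult_ac)
qed

lemma comp_meas_PB[measurable]: "(\<lambda>\<omega>. \<omega> j) \<in> measurable PB borel"
  by (rule measurable_component_singleton) simp

lemma SS_meas[measurable]: "SS \<in> borel_measurable PB"
  unfolding SS_def suminf_eq_lim by measurable

lemma \<Phi>_meas[measurable]: "\<Phi> \<in> borel_measurable PB"
  unfolding \<Phi>_def by measurable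

lemma nn_\<Omega>_M:
  assumes "g \<in> borel_measurable PB"
  shows "(\<integral>\<^sup>+ \<omega>. g \<omega> \<partial>\<Omega>) = (\<integral>\<^sup>+ \<omega>. g (Wseq \<omega>) \<partial>M)"
proof -
  have "(\<integral>\<^sup>+ \<omega>. g \<omega> \<partial>\<Omega>) = (\<integral>\<^sup>+ \<omega>. g \<omega> \<partial>distr M PB Wseq)" by (simp add: distr_Wseq)
  also have "\<dots> = (\<integral>\<^sup>+ \<omega>. g (Wseq \<omega>) \<partial>M)"
    using assms by (intro nn_integral_distr) auto
  finally show ?thesis .
qed

lemma G_\<Omega>:
  "(\<integral>\<^sup>+ \<omega>. (\<Sum>j. ennreal (b (j + k) * norm (\<omega> (j + k) - m)))^2 \<partial>\<Omega>)
     \<le> ennreal (C * mnorm E * r^k / (1 - r))^2 * \<sigma>2"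
proof -
  have "(\<integral>\<^sup>+ \<omega>. (\<Sum>j. ennreal (b (j + k) * norm (\<omega> (j + k) - m)))^2 \<partial>\<Omega>)
     \<le> (\<Sum>j. ennreal (b (j + k)))^2 * \<sigma>2"
  proof (rule G_bound)
    show "(\<lambda>\<omega>. norm (\<omega> (j + k) - m)) \<in> borel_measurable \<Omega>" for j
      by (simp add: measurable_cong_sets[OF sets_\<Omega> refl])
    show "(\<integral>\<^sup>+ \<omega>. ennreal ((norm (\<omega> (j + k) - m))^2) \<partial>\<Omega>) \<le> \<sigma>2" for j
      by (subst nn_\<Omega>_M) (simp_all add: Wseq_def \<sigma>2_j)
  qed (auto simp: b_nonneg)
  also have "(\<Sum>j. ennreal (b (j + k))) = ennreal (C * mnorm E * r^k / (1 - r))"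
    using b_sums[of k] b_nonneg by (simp add: sums_iff suminf_ennreal2)
  finally show ?thesis .
qed

lemma AE_good: "AE \<omega> in \<Omega>. good \<omega>"
proof -
  have m: "(\<lambda>\<omega>. (\<Sum>j. ennreal (b j * norm (\<omega> j - m)))^2) \<in> borel_measurable \<Omega>"
    by (simp add: measurable_cong_sets[OF sets_\<Omega> refl])
  have "(\<integral>\<^sup>+ \<omega>. (\<Sum>j. ennreal (b j * norm (\<omega> j - m)))^2 \<partial>\<Omega>) < \<infinity>"
    using G_\<Omega>[of 0] \<sigma>2_fin by (auto simp: ennreal_mult_less_top power_less_top_ennreal intro: le_less_trans)
  then have "AE \<omega> in \<Omega>. (\<Sum>j. ennreal (b j * norm (\<omega> j - m)))^2 \<noteq> \<infinity>"
    using m by (intro nn_integral_PInf_AE) auto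
  then show ?thesis
  proof (rule AE_mp, intro AE_I2 impI)
    fix \<omega> assume "(\<Sum>j. ennreal (b j * norm (\<omega> j - m)))^2 \<noteq> \<infinity>"
    then have "(\<Sum>j. ennreal (b j * norm (\<omega> j - m))) \<noteq> \<infinity>"
      by (auto simp: power2_eq_square ennreal_mult_eq_top_iff)
    then show "good \<omega>" unfolding good_def
      by (intro summable_suminf_not_top) (auto simp: b_nonneg)
  qed
qed

lemma good_summable:
  assumes "good \<omega>"
  shows "summable (\<lambda>j. norm (matpow At j *v (E *v (\<omega> j - m))))"
  using assms unfolding good_def
  by (rule summable_comparison_test'[where N=0]) (simp add: term_bound)

lemma good_tail:
  assumes "good \<omega>"
  shows "norm (SS \<omega> - (\<Sum>j<k. matpow At j *v (E *v (\<omega> j - m))))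
           \<le> (\<Sum>j. b (j + k) * norm (\<omega> (j + k) - m))"
proof -
  let ?g = "\<lambda>j. matpow At j *v (E *v (\<omega> j - m))"
  have sn: "summable (\<lambda>j. norm (?g j))" by (rule good_summable[OF assms])
  then have s: "summable ?g" by (rule summable_norm_cancel)
  have sk: "summable (\<lambda>j. norm (?g (j + k)))" using sn summable_iff_shift[of "\<lambda>j. norm (?g j)" k] by simp
  have sb: "summable (\<lambda>j. b (j + k) * norm (\<omega> (j + k) - m))"
    using assms summable_iff_shift[of "\<lambda>j. b j * norm (\<omega> j - m)" k] unfolding good_def by simp
  have "SS \<omega> - (\<Sum>j<k. ?g j) = (\<Sum>j. ?g (j + k))"
    unfolding SS_def using suminf_split_initial_segment[OF s, of k] by simp
  also have "norm \<dots> \<le> (\<Sum>j. norm (?g (j + k)))" by (rule summable_norm[OF sk])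
  also have "\<dots> \<le> (\<Sum>j. b (j + k) * norm (\<omega> (j + k) - m))"
    by (rule suminf_le[OF _ sk sb]) (simp add: term_bound)
  finally show ?thesis .
qed


lemma Minv_left: "Minv ** (mat 1 - At) = mat 1" and Minv_right: "(mat 1 - At) ** Minv = mat 1"
proof -
  have "(mat 1 - At) ** Minv = mat 1 \<and> Minv ** (mat 1 - At) = mat 1"
    unfolding Minv_def matrix_inv_def using inv unfolding invertible_def by (rule someI_ex)
  then show "Minv ** (mat 1 - At) = mat 1" "(mat 1 - At) ** Minv = mat 1" by auto
qed

lemma cc_fix: "At *v cc + Ft *v m = cc"
proof -
  have "(mat 1 - At) *v cc = Ft *v m"
    unfolding cc_def by (simp add: matrix_vector_mul_assoc matrix_mul_assoc Minv_right)
  then show ?thesis by (simp add: matrix_vector_mult_diff_rdistrib algebra_simps)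
qed

lemma Phi_shift:
  assumes g: "good \<omega>"
  shows "\<Phi> (case_nat w \<omega>) = At *v \<Phi> \<omega> + Ft *v m + E *v (w - m)"
proof -
  let ?h = "\<lambda>j. matpow At j *v (E *v (\<omega> j - m))"
  let ?g = "\<lambda>j. matpow At j *v (E *v (case_nat w \<omega> j - m))"
  have sh: "summable ?h" using good_summable[OF g] by (rule summable_norm_cancel)
  have bl: "bounded_linear ((*v) At)" by simp
  have gs: "(\<lambda>j. ?g (Suc j)) = (\<lambda>j. At *v ?h j)"
    by (simp add: matrix_vector_mul_assoc matrix_mul_assoc)
  have sgs: "summable (\<lambda>j. ?g (Suc j))" unfolding gs by (rule bounded_linear.summable[OF bl sh])
  then have sg: "summable ?g" using summable_Suc_iff[of ?g] by blast
  have "SS (case_nat w \<omega>) = ?g 0 + (\<Sum>j. ?g (Suc j))"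
    unfolding SS_def using suminf_split_head[OF sg] by simp
  also have "(\<Sum>j. ?g (Suc j)) = At *v SS \<omega>"
    unfolding gs SS_def by (rule bounded_linear.suminf[OF bl sh, symmetric])
  finally have ss: "SS (case_nat w \<omega>) = E *v (w - m) + At *v SS \<omega>" by simp
  have "\<Phi> (case_nat w \<omega>) = cc + (E *v (w - m) + At *v SS \<omega>)" unfolding \<Phi>_def ss ..
  also have "\<dots> = (At *v cc + Ft *v m) + (E *v (w - m) + At *v SS \<omega>)" using cc_fix by simp
  also have "\<dots> = At *v (cc + SS \<omega>) + Ft *v m + E *v (w - m)"
    by (simp only: matrix_vector_right_distrib add_ac)
  finally show ?thesis unfolding \<Phi>_def .
qed

lemma \<Phi>_meas\<Omega>[measurable]: "\<Phi> \<in> borel_measurable \<Omega>"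
  by (simp add: measurable_cong_sets[OF sets_\<Omega> refl])

lemma stationary_core:
  fixes N :: "'b measure" and Xb :: "'b \<Rightarrow> real^'nx"
  assumes N: "prob_space N" and Xb[measurable]: "Xb \<in> borel_measurable N"
    and law: "distr N borel Xb = distr \<Omega> borel \<Phi>"
  shows "distr N borel Xb = distr (N \<Otimes>\<^sub>M \<mu>W) borel (\<lambda>(\<omega>, w). At *v Xb \<omega> + Ft *v m + E *v (w - m))"
proof -
  interpret W: prob_space \<mu>W by (rule prob_\<mu>W)
  interpret O: prob_space \<Omega> by (rule prob_\<Omega>)
  interpret NN: prob_space N by (rule N)
  define h where "h = (\<lambda>(x::real^'nx, w::real^'nw). At *v x + Ft *v m + E *v (w - m))"
  have hm: "h \<in> borel_measurable (borel \<Otimes>\<^sub>M \<mu>W)"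
    unfolding h_def by (simp add: measurable_cong_sets[OF sets_pair_measure_cong[OF refl sets_\<mu>W] refl])
  have m1: "(\<lambda>(x, y). (Xb x, y)) \<in> measurable (N \<Otimes>\<^sub>M \<mu>W) (borel \<Otimes>\<^sub>M \<mu>W)" by measurable
  have m2: "(\<lambda>(x, y). (\<Phi> x, y)) \<in> measurable (\<Omega> \<Otimes>\<^sub>M \<mu>W) (borel \<Otimes>\<^sub>M \<mu>W)" by measurable
  have Tm: "(\<lambda>(\<omega>, w). case_nat w \<omega>) \<in> measurable (\<Omega> \<Otimes>\<^sub>M \<mu>W) \<Omega>"
  proof -
    have "(\<lambda>p. case_nat (snd p) (fst p)) \<in> measurable (\<Omega> \<Otimes>\<^sub>M \<mu>W) (PiM UNIV (\<lambda>_. \<mu>W))"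
      unfolding \<Omega>_def
      by (rule measurable_PiM_single') (auto split: nat.split simp: \<Omega>_def)
    then show ?thesis by (simp add: \<Omega>_def case_prod_beta')
  qed
  have p1: "distr (N \<Otimes>\<^sub>M \<mu>W) (borel \<Otimes>\<^sub>M \<mu>W) (\<lambda>(x, y). (Xb x, y)) = distr N borel Xb \<Otimes>\<^sub>M \<mu>W"
  proof -
    have "distr N borel Xb \<Otimes>\<^sub>M distr \<mu>W \<mu>W (\<lambda>x. x) = distr (N \<Otimes>\<^sub>M \<mu>W) (borel \<Otimes>\<^sub>M \<mu>W) (\<lambda>(x, y). (Xb x, y))"
      by (rule pair_measure_distr) (auto intro: W.sigma_finite_measure_axioms)
    then show ?thesis by simp
  qed
  have p2: "distr (\<Omega> \<Otimes>\<^sub>M \<mu>W) (borel \<Otimes>\<^sub>M \<mu>W) (\<lambda>(x, y). (\<Phi> x, y)) = distr \<Omega> borel \<Phi> \<Otimes>\<^sub>M \<mu>W"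
  proof -
    have "distr \<Omega> borel \<Phi> \<Otimes>\<^sub>M distr \<mu>W \<mu>W (\<lambda>x. x) = distr (\<Omega> \<Otimes>\<^sub>M \<mu>W) (borel \<Otimes>\<^sub>M \<mu>W) (\<lambda>(x, y). (\<Phi> x, y))"
      by (rule pair_measure_distr) (auto intro: W.sigma_finite_measure_axioms)
    then show ?thesis by simp
  qed
  have aeg: "AE p in \<Omega> \<Otimes>\<^sub>M \<mu>W. good (fst p)"
  proof (rule AE_distrD[of fst "\<Omega> \<Otimes>\<^sub>M \<mu>W" \<Omega>])
    show "fst \<in> measurable (\<Omega> \<Otimes>\<^sub>M \<mu>W) \<Omega>" by simp
    show "AE x in distr (\<Omega> \<Otimes>\<^sub>M \<mu>W) \<Omega> fst. good x"
      using AE_good W.distr_pair_fst[of \<Omega>] by metis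
  qed
  have "distr (N \<Otimes>\<^sub>M \<mu>W) borel (\<lambda>(\<omega>, w). At *v Xb \<omega> + Ft *v m + E *v (w - m))
      = distr (N \<Otimes>\<^sub>M \<mu>W) borel (h \<circ> (\<lambda>(x, y). (Xb x, y)))"
    by (simp add: h_def comp_def case_prod_beta')
  also have "\<dots> = distr (distr (N \<Otimes>\<^sub>M \<mu>W) (borel \<Otimes>\<^sub>M \<mu>W) (\<lambda>(x, y). (Xb x, y))) borel h"
    by (rule distr_distr[OF hm m1, symmetric])
  also have "\<dots> = distr (distr (\<Omega> \<Otimes>\<^sub>M \<mu>W) (borel \<Otimes>\<^sub>M \<mu>W) (\<lambda>(x, y). (\<Phi> x, y))) borel h"
    by (simp only: p1 p2 law)
  also have "\<dots> = distr (\<Omega> \<Otimes>\<^sub>M \<mu>W) borel (h \<circ> (\<lambda>(x, y). (\<Phi> x, y)))"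
    by (rule distr_distr[OF hm m2])
  also have "\<dots> = distr (\<Omega> \<Otimes>\<^sub>M \<mu>W) borel (\<Phi> \<circ> (\<lambda>(\<omega>, w). case_nat w \<omega>))"
  proof (rule distr_cong_AE)
    show "AE x in \<Omega> \<Otimes>\<^sub>M \<mu>W. (h \<circ> (\<lambda>(x, y). (\<Phi> x, y))) x = (\<Phi> \<circ> (\<lambda>(\<omega>, w). case_nat w \<omega>)) x"
      using aeg by (rule AE_mp) (auto simp: h_def Phi_shift)
    show "h \<circ> (\<lambda>(x, y). (\<Phi> x, y)) \<in> borel_measurable (\<Omega> \<Otimes>\<^sub>M \<mu>W)"
      by (rule measurable_comp[OF m2 hm])
    show "\<Phi> \<circ> (\<lambda>(\<omega>, w). case_nat w \<omega>) \<in> borel_measurable (\<Omega> \<Otimes>\<^sub>M \<mu>W)"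
      by (rule measurable_comp[OF Tm \<Phi>_meas\<Omega>])
  qed auto
  also have "\<dots> = distr (distr (\<Omega> \<Otimes>\<^sub>M \<mu>W) \<Omega> (\<lambda>(\<omega>, w). case_nat w \<omega>)) borel \<Phi>"
    by (rule distr_distr[OF \<Phi>_meas\<Omega> Tm, symmetric])
  also have "\<dots> = distr N borel Xb" by (simp add: distr_shift law)
  finally show ?thesis ..
qed

definition "Yf k x \<omega> = matpow At k *v x + (\<Sum>i<k. matpow At i *v (Ft *v m + E *v (\<omega> i - m)))"

lemma geo_sum_aux: "(mat 1 - At) *v (\<Sum>i<k. matpow At i *v v) = v - matpow At k *v v"
proof (induction k)
  case 0 then show ?case by simp
next
  case (Suc k)
  have e1: "(mat 1 - At) *v (\<Sum>i<Suc k. matpow At i *v v)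
      = (mat 1 - At) *v (\<Sum>i<k. matpow At i *v v) + (mat 1 - At) *v (matpow At k *v v)"
    by (simp add: matrix_vector_right_distrib)
  have e2: "(mat 1 - At) *v (matpow At k *v v) = matpow At k *v v - matpow At (Suc k) *v v"
    by (simp add: matrix_vector_mult_diff_rdistrib matrix_vector_mul_assoc[symmetric])
  show ?case unfolding e1 e2 Suc by simp
qed

lemma geo_sum: "(\<Sum>i<k. matpow At i *v v) = Minv *v (v - matpow At k *v v)"
proof -
  have "Minv *v ((mat 1 - At) *v (\<Sum>i<k. matpow At i *v v)) = (\<Sum>i<k. matpow At i *v v)"
    by (simp add: matrix_vector_mul_assoc Minv_left)
  then show ?thesis using geo_sum_aux by simp
qed

lemma sum_mv: "(\<Sum>i\<in>I. X i *v v i) = (\<Sum>i\<in>I. X i *v v i)" ..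

lemma Yf_split: "Yf k x \<omega> = matpow At k *v x + Minv *v (Ft *v m - matpow At k *v (Ft *v m))
    + (\<Sum>i<k. matpow At i *v (E *v (\<omega> i - m)))"
  unfolding Yf_def geo_sum[symmetric] by (simp add: matrix_vector_right_distrib sum.distrib)

lemma cc_eq: "cc = Minv *v (Ft *v m)"
  unfolding cc_def by (simp add: matrix_vector_mul_assoc)

lemma pow_tendsto: "(\<lambda>k. matpow At k *v x) \<longlonglongrightarrow> 0"
proof (rule Lim_null_comparison)
  show "\<forall>\<^sub>F k in sequentially. norm (matpow At k *v x) \<le> C * r^k * norm x"
    using geo by simp
  have rk: "(\<lambda>k. r^k) \<longlonglongrightarrow> 0" using r0 r1 by (intro LIMSEQ_power_zero) simp
  show "(\<lambda>k. C * r^k * norm x) \<longlonglongrightarrow> 0"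
    using tendsto_mult[OF tendsto_mult[OF tendsto_const rk] tendsto_const, of C "norm x"] by simp
qed

lemma Y_conv:
  assumes g: "good \<omega>"
  shows "(\<lambda>k. Yf k x \<omega>) \<longlonglongrightarrow> \<Phi> \<omega>"
proof -
  have bl: "bounded_linear ((*v) Minv)" by simp
  have t1: "(\<lambda>k. matpow At k *v x) \<longlonglongrightarrow> 0" by (rule pow_tendsto)
  have "(\<lambda>k. Ft *v m - matpow At k *v (Ft *v m)) \<longlonglongrightarrow> Ft *v m - 0"
    by (intro tendsto_diff tendsto_const pow_tendsto)
  then have t2: "(\<lambda>k. Minv *v (Ft *v m - matpow At k *v (Ft *v m))) \<longlonglongrightarrow> cc"
    unfolding cc_eq using bounded_linear.tendsto[OF bl] by simp
  have sh: "summable (\<lambda>j. matpow At j *v (E *v (\<omega> j - m)))"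
    using good_summable[OF g] by (rule summable_norm_cancel)
  have t3: "(\<lambda>k. \<Sum>i<k. matpow At i *v (E *v (\<omega> i - m))) \<longlonglongrightarrow> SS \<omega>"
    unfolding SS_def by (rule summable_LIMSEQ[OF sh])
  have "(\<lambda>k. matpow At k *v x + Minv *v (Ft *v m - matpow At k *v (Ft *v m))
    + (\<Sum>i<k. matpow At i *v (E *v (\<omega> i - m)))) \<longlonglongrightarrow> 0 + cc + SS \<omega>"
    by (intro tendsto_add t1 t2 t3)
  then show ?thesis unfolding Yf_split \<Phi>_def by simp
qed

lemma Y_dist:
  assumes g: "good \<omega>"
  shows "norm (Yf k x \<omega> - \<Phi> \<omega>) \<le> C * r^k * norm x + mnorm Minv * (C * r^k * norm (Ft *v m))
      + (\<Sum>j. b (j + k) * norm (\<omega> (j + k) - m))"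
proof -
  have "Yf k x \<omega> - \<Phi> \<omega> = matpow At k *v x - Minv *v (matpow At k *v (Ft *v m))
      - (SS \<omega> - (\<Sum>i<k. matpow At i *v (E *v (\<omega> i - m))))"
    unfolding Yf_split \<Phi>_def cc_eq by (simp add: matrix_vector_mult_diff_distrib algebra_simps)
  also have "norm \<dots> \<le> norm (matpow At k *v x) + norm (Minv *v (matpow At k *v (Ft *v m)))
      + norm (SS \<omega> - (\<Sum>i<k. matpow At i *v (E *v (\<omega> i - m))))"
    by (rule order_trans[OF norm_triangle_ineq4 add_right_mono[OF norm_triangle_ineq4]])
  also have "\<dots> \<le> C * r^k * norm x + mnorm Minv * (C * r^k * norm (Ft *v m))
      + (\<Sum>j. b (j + k) * norm (\<omega> (j + k) - m))"
  proof (intro add_mono geo good_tail[OF g])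
    show "norm (Minv *v (matpow At k *v (Ft *v m))) \<le> mnorm Minv * (C * r ^ k * norm (Ft *v m))"
      by (rule order_trans[OF norm_mv_le mult_left_mono[OF geo mnorm_nonneg]])
  qed
  finally show ?thesis .
qed

lemma Y_L2:
  assumes p0: "prob_space \<mu>0" and s0: "sets \<mu>0 = sets borel"
    and fin: "(\<integral>\<^sup>+ x. ennreal ((norm x)^2) \<partial>\<mu>0) < \<infinity>"
  shows "(\<lambda>k. \<integral>\<^sup>+ p. ennreal ((dist (Yf k (fst p) (snd p)) (\<Phi> (snd p)))^2) \<partial>(\<mu>0 \<Otimes>\<^sub>M \<Omega>)) \<longlonglongrightarrow> 0"
proof -
  interpret P0: prob_space \<mu>0 by (rule p0)
  interpret O: prob_space \<Omega> by (rule prob_\<Omega>)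
  interpret PPP: pair_prob_space \<mu>0 \<Omega> ..
  have PP: "prob_space (\<mu>0 \<Otimes>\<^sub>M \<Omega>)" by unfold_locales
  define I0 where "I0 = (\<integral>\<^sup>+ x. ennreal ((norm x)^2) \<partial>\<mu>0)"
  define Q1 where "Q1 = mnorm Minv * C * norm (Ft *v m)"
  define Q2 where "Q2 = C * mnorm E / (1 - r)"
  define tl where "tl k \<omega> = (\<Sum>j. ennreal (b (j + k) * norm (\<omega> (j + k) - m)))" for k \<omega>
  define T where "T k = ennreal (3 * C^2 * (r^2)^k) * I0 + ennreal (3 * Q1^2 * (r^2)^k)
      + 3 * (ennreal (Q2 * r^k)^2 * \<sigma>2)" for k
  have sL: "sets (\<mu>0 \<Otimes>\<^sub>M \<Omega>) = sets (borel \<Otimes>\<^sub>M PB)"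
    using s0 sets_\<Omega> by (rule sets_pair_measure_cong)
  have fstm: "fst \<in> measurable (\<mu>0 \<Otimes>\<^sub>M \<Omega>) \<mu>0" by simp
  have sndm: "snd \<in> measurable (\<mu>0 \<Otimes>\<^sub>M \<Omega>) \<Omega>" by simp
  have dfst: "distr (\<mu>0 \<Otimes>\<^sub>M \<Omega>) \<mu>0 fst = \<mu>0" by (rule O.distr_pair_fst)
  have dsnd: "distr (\<mu>0 \<Otimes>\<^sub>M \<Omega>) \<Omega> snd = \<Omega>"
    by (rule distr_pair_snd'[OF p0 O.sigma_finite_measure_axioms])
  have aeg: "AE p in \<mu>0 \<Otimes>\<^sub>M \<Omega>. good (snd p)"
    by (rule AE_distrD[OF sndm]) (unfold dsnd, rule AE_good)
  have tlm: "tl k \<in> borel_measurable \<Omega>" for k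
    unfolding tl_def by (simp add: measurable_cong_sets[OF sets_\<Omega> refl])
  have bound: "(\<integral>\<^sup>+ p. ennreal ((dist (Yf k (fst p) (snd p)) (\<Phi> (snd p)))^2) \<partial>(\<mu>0 \<Otimes>\<^sub>M \<Omega>)) \<le> T k" for k
  proof -
    have "(\<integral>\<^sup>+ p. ennreal ((dist (Yf k (fst p) (snd p)) (\<Phi> (snd p)))^2) \<partial>(\<mu>0 \<Otimes>\<^sub>M \<Omega>))
      \<le> (\<integral>\<^sup>+ p. ennreal (3 * C^2 * (r^2)^k) * ennreal ((norm (fst p))^2) + ennreal (3 * Q1^2 * (r^2)^k)
            + 3 * (tl k (snd p))^2 \<partial>(\<mu>0 \<Otimes>\<^sub>M \<Omega>))"
    proof (rule nn_integral_mono_AE)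
      show "AE p in \<mu>0 \<Otimes>\<^sub>M \<Omega>. ennreal ((dist (Yf k (fst p) (snd p)) (\<Phi> (snd p)))^2)
          \<le> ennreal (3 * C^2 * (r^2)^k) * ennreal ((norm (fst p))^2) + ennreal (3 * Q1^2 * (r^2)^k)
            + 3 * (tl k (snd p))^2"
        using aeg
      proof (rule AE_mp, intro AE_I2 impI)
        fix p :: "(real^'nx) \<times> (nat \<Rightarrow> real^'nw)"
        assume g: "good (snd p)"
        define x where "x = fst p"
        define \<omega> where "\<omega> = snd p"
        have g': "good \<omega>" using g by (simp add: \<omega>_def)
        define c where "c = (\<Sum>j. b (j + k) * norm (\<omega> (j + k) - m))"
        have sb: "summable (\<lambda>j. b (j + k) * norm (\<omega> (j + k) - m))"
          using g' summable_iff_shift[of "\<lambda>j. b j * norm (\<omega> j - m)" k] unfolding good_def by simp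
        have c0: "0 \<le> c" unfolding c_def by (intro suminf_nonneg sb) (simp add: b_nonneg)
        have tlc: "tl k \<omega> = ennreal c"
          unfolding tl_def c_def by (rule suminf_ennreal2[OF _ sb]) (simp add: b_nonneg)
        have d: "dist (Yf k x \<omega>) (\<Phi> \<omega>) \<le> C * r^k * norm x + Q1 * r^k + c"
          using Y_dist[OF g', of k x] unfolding dist_norm Q1_def c_def by (simp add: mult_ac)
        have "(dist (Yf k x \<omega>) (\<Phi> \<omega>))^2 \<le> 3 * (C * r^k * norm x)^2 + 3 * (Q1 * r^k)^2 + 3 * c^2"
          by (rule sq3[OF _ _ c0 _ d]) (use C0 r0 in \<open>auto simp: Q1_def mnorm_nonneg\<close>)
        also have "\<dots> = (3 * C^2 * (r^2)^k) * (norm x)^2 + 3 * Q1^2 * (r^2)^k + 3 * c^2"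
          by (simp add: power_mult_distrib power_mult[symmetric] mult_ac)
        finally have "ennreal ((dist (Yf k x \<omega>) (\<Phi> \<omega>))^2)
            \<le> ennreal ((3 * C^2 * (r^2)^k) * (norm x)^2 + 3 * Q1^2 * (r^2)^k + 3 * c^2)"
          by (rule ennreal_leI)
        also have "\<dots> = ennreal (3 * C^2 * (r^2)^k) * ennreal ((norm x)^2) + ennreal (3 * Q1^2 * (r^2)^k)
            + 3 * (ennreal c)^2"
          using c0 by (simp add: ennreal_plus ennreal_mult ennreal_power)
        finally show "ennreal ((dist (Yf k (fst p) (snd p)) (\<Phi> (snd p)))^2)
          \<le> ennreal (3 * C^2 * (r^2)^k) * ennreal ((norm (fst p))^2) + ennreal (3 * Q1^2 * (r^2)^k)
            + 3 * (tl k (snd p))^2"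
          by (simp add: x_def \<omega>_def tlc[unfolded \<omega>_def])
      qed
    qed
    also have "\<dots> = ennreal (3 * C^2 * (r^2)^k) * (\<integral>\<^sup>+ p. ennreal ((norm (fst p))^2) \<partial>(\<mu>0 \<Otimes>\<^sub>M \<Omega>))
        + ennreal (3 * Q1^2 * (r^2)^k) + 3 * (\<integral>\<^sup>+ p. (tl k (snd p))^2 \<partial>(\<mu>0 \<Otimes>\<^sub>M \<Omega>))"
      using tlm[of k] sndm prob_space.emeasure_space_1[OF PP]
      by (simp add: nn_integral_add nn_integral_cmult measurable_cong_sets[OF sL refl])
    also have "(\<integral>\<^sup>+ p. ennreal ((norm (fst p))^2) \<partial>(\<mu>0 \<Otimes>\<^sub>M \<Omega>)) = I0"
    proof -
      have "(\<integral>\<^sup>+ p. ennreal ((norm (fst p))^2) \<partial>(\<mu>0 \<Otimes>\<^sub>M \<Omega>)) = (\<integral>\<^sup>+ x. ennreal ((norm x)^2) \<partial>distr (\<mu>0 \<Otimes>\<^sub>M \<Omega>) \<mu>0 fst)"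
        by (rule nn_integral_distr[OF fstm, symmetric]) (simp add: measurable_cong_sets[OF s0 refl])
      then show ?thesis by (simp add: dfst I0_def)
    qed
    also have "(\<integral>\<^sup>+ p. (tl k (snd p))^2 \<partial>(\<mu>0 \<Otimes>\<^sub>M \<Omega>)) = (\<integral>\<^sup>+ \<omega>. (tl k \<omega>)^2 \<partial>\<Omega>)"
    proof -
      have "(\<integral>\<^sup>+ p. (tl k (snd p))^2 \<partial>(\<mu>0 \<Otimes>\<^sub>M \<Omega>)) = (\<integral>\<^sup>+ \<omega>. (tl k \<omega>)^2 \<partial>distr (\<mu>0 \<Otimes>\<^sub>M \<Omega>) \<Omega> snd)"
        by (rule nn_integral_distr[OF sndm, symmetric]) (use tlm in simp)
      then show ?thesis by (simp add: dsnd)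
    qed
    also have "(\<integral>\<^sup>+ \<omega>. (tl k \<omega>)^2 \<partial>\<Omega>) \<le> ennreal (Q2 * r^k)^2 * \<sigma>2"
      using G_\<Omega>[of k] unfolding tl_def Q2_def by (simp add: mult_ac)
    finally show ?thesis unfolding T_def I0_def
      by (simp add: add_left_mono mult_left_mono)
  qed
  have T0: "T \<longlonglongrightarrow> 0"
  proof -
    have rk: "(\<lambda>k. (r^2)^k) \<longlonglongrightarrow> 0" using r0 r1 by (intro LIMSEQ_power_zero) (simp add: power_less_one_iff abs_square_less_1)
    have a1: "(\<lambda>k. ennreal (3 * C^2 * (r^2)^k)) \<longlonglongrightarrow> 0"
      using tendsto_ennrealI[OF tendsto_mult[OF tendsto_const rk, of "3 * C^2"]] by simp
    have a2: "(\<lambda>k. ennreal (3 * Q1^2 * (r^2)^k)) \<longlonglongrightarrow> 0"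
      using tendsto_ennrealI[OF tendsto_mult[OF tendsto_const rk, of "3 * Q1^2"]] by simp
    have a3: "(\<lambda>k. ennreal (Q2^2 * (r^2)^k)) \<longlonglongrightarrow> 0"
      using tendsto_ennrealI[OF tendsto_mult[OF tendsto_const rk, of "Q2^2"]] by simp
    have I0f: "I0 < \<infinity>" using fin by (simp add: I0_def)
    have s2f: "\<sigma>2 < \<infinity>" using \<sigma>2_fin by simp
    have "(\<lambda>k. ennreal (3 * C^2 * (r^2)^k) * I0 + ennreal (3 * Q1^2 * (r^2)^k)
      + 3 * (ennreal (Q2^2 * (r^2)^k) * \<sigma>2)) \<longlonglongrightarrow> 0 * I0 + 0 + 3 * (0 * \<sigma>2)"
      by (intro tendsto_add ennreal_tendsto_cmult tendsto_mult_ennreal a1 a2 a3 tendsto_const)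
        (use I0f s2f in auto)
    moreover have "ennreal (Q2 * r^k)^2 = ennreal (Q2^2 * (r^2)^k)" for k
    proof -
      have "0 \<le> Q2 * r^k" using C0 r0 r1 mnorm_nonneg[of E] by (simp add: Q2_def)
      then have "ennreal (Q2 * r^k)^2 = ennreal ((Q2 * r^k)^2)" by (rule ennreal_power)
      also have "(Q2 * r^k)^2 = Q2^2 * (r^2)^k" by (simp add: power_mult_distrib power_mult[symmetric] mult.commute)
      finally show ?thesis .
    qed
    ultimately show ?thesis unfolding T_def by simp
  qed
  show ?thesis
    by (rule tendsto_sandwich[OF _ _ tendsto_const T0]) (auto intro: always_eventually bound)
qed

definition "xdf k x \<omega> = matpow At k *v x + (\<Sum>i<k. matpow At i *v (Ft *v m + E *v (\<omega> (k - 1 - i) - m)))"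
definition "\<rho> k i = (if i < k then k - 1 - i else (i::nat))"

lemma mv_sum: "A *v (\<Sum>i\<in>I. f i) = (\<Sum>i\<in>I. A *v f i)"
  by (induction I rule: infinite_finite_induct) (simp_all add: matrix_vector_right_distrib)

lemma xdf_0: "xdf 0 x \<omega> = x"
  by (simp add: xdf_def)

lemma xdf_Suc: "xdf (Suc k) x \<omega> = At *v xdf k x \<omega> + Ft *v m + E *v (\<omega> k - m)"
proof -
  have "(\<Sum>i<Suc k. matpow At i *v (Ft *v m + E *v (\<omega> (Suc k - 1 - i) - m)))
      = (Ft *v m + E *v (\<omega> k - m)) + (\<Sum>i<k. matpow At (Suc i) *v (Ft *v m + E *v (\<omega> (k - 1 - i) - m)))"
    by (subst sum.lessThan_Suc_shift) simp
  also have "(\<Sum>i<k. matpow At (Suc i) *v (Ft *v m + E *v (\<omega> (k - 1 - i) - m)))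
      = At *v (\<Sum>i<k. matpow At i *v (Ft *v m + E *v (\<omega> (k - 1 - i) - m)))"
    by (simp add: mv_sum matrix_vector_mul_assoc)
  finally show ?thesis
    by (simp add: xdf_def matrix_vector_right_distrib matrix_vector_mul_assoc add_ac)
qed

lemma inj_\<rho>: "inj (\<rho> k)"
  unfolding inj_def \<rho>_def by (auto split: if_splits)

lemma xdf_perm: "xdf k x (\<omega> \<circ> \<rho> k) = Yf k x \<omega>"
proof -
  have "(\<Sum>i<k. matpow At i *v (Ft *v m + E *v ((\<omega> \<circ> \<rho> k) (k - 1 - i) - m)))
      = (\<Sum>i<k. matpow At i *v (Ft *v m + E *v (\<omega> i - m)))"
    by (rule sum.cong) (auto simp: \<rho>_def)
  then show ?thesis by (simp add: xdf_def Yf_def)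
qed

lemma perm_meas: "(\<lambda>\<omega>. \<omega> \<circ> \<sigma>) \<in> measurable \<Omega> \<Omega>"
proof -
  have "(\<lambda>\<omega> i. \<omega> (\<sigma> i)) \<in> measurable \<Omega> (PiM UNIV (\<lambda>_. \<mu>W))"
    unfolding \<Omega>_def by (rule measurable_PiM_single') auto
  then show ?thesis by (simp add: \<Omega>_def comp_def)
qed

lemma Xd_law:
  fixes Xini :: "'a \<Rightarrow> real^'nx"
  assumes Xm[measurable]: "Xini \<in> borel_measurable M"
    and ind: "indep_set {Xini -` S \<inter> space M | S. S \<in> sets borel} {Wseq -` S \<inter> space M | S. S \<in> sets PB}"
  shows "distr M borel (\<lambda>\<omega>. xdf k (Xini \<omega>) (Wseq \<omega>))
       = distr (distr M borel Xini \<Otimes>\<^sub>M \<Omega>) borel (\<lambda>p. Yf k (fst p) (snd p))"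
proof -
  define \<mu>0 where "\<mu>0 = distr M borel Xini"
  interpret P0: prob_space \<mu>0 unfolding \<mu>0_def by (rule prob_space_distr) simp
  interpret O: prob_space \<Omega> by (rule prob_\<Omega>)
  have s0: "sets \<mu>0 = sets borel" by (simp add: \<mu>0_def)
  have sL: "sets (\<mu>0 \<Otimes>\<^sub>M \<Omega>) = sets (borel \<Otimes>\<^sub>M PB)"
    using s0 sets_\<Omega> by (rule sets_pair_measure_cong)
  define F where "F = (\<lambda>p. xdf k (fst p) (snd p))"
  have Fm: "F \<in> borel_measurable (borel \<Otimes>\<^sub>M PB)"
    unfolding F_def xdf_def by measurable
  have FmL: "F \<in> borel_measurable (\<mu>0 \<Otimes>\<^sub>M \<Omega>)"
    using Fm by (simp add: measurable_cong_sets[OF sL refl])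
  have pm: "(\<lambda>\<omega>. (Xini \<omega>, Wseq \<omega>)) \<in> measurable M (borel \<Otimes>\<^sub>M PB)" by measurable
  have jd: "distr M (borel \<Otimes>\<^sub>M PB) (\<lambda>\<omega>. (Xini \<omega>, Wseq \<omega>)) = \<mu>0 \<Otimes>\<^sub>M \<Omega>"
  proof -
    interpret Y: prob_space "distr M PB Wseq" by (rule prob_space_distr) simp
    interpret XY: pair_prob_space \<mu>0 "distr M PB Wseq" ..
    have "\<mu>0 \<Otimes>\<^sub>M distr M PB Wseq = distr M (borel \<Otimes>\<^sub>M PB) (\<lambda>\<omega>. (Xini \<omega>, Wseq \<omega>))"
    proof (rule pair_measure_eqI)
      show "sigma_finite_measure \<mu>0" ..
      show "sigma_finite_measure (distr M PB Wseq)" ..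
      fix A B assume A: "A \<in> sets \<mu>0" and B: "B \<in> sets (distr M PB Wseq)"
      have "emeasure (distr M (borel \<Otimes>\<^sub>M PB) (\<lambda>\<omega>. (Xini \<omega>, Wseq \<omega>))) (A \<times> B)
          = emeasure M ((\<lambda>x. (Xini x, Wseq x)) -` (A \<times> B) \<inter> space M)"
        using A B s0 by (intro emeasure_distr[OF pm]) auto
      also have "(\<lambda>x. (Xini x, Wseq x)) -` (A \<times> B) \<inter> space M = (Xini -` A \<inter> space M) \<inter> (Wseq -` B \<inter> space M)"
        by auto
      also have "emeasure M \<dots> = emeasure M (Xini -` A \<inter> space M) * emeasure M (Wseq -` B \<inter> space M)"
      proof -
        have h1: "Xini -` A \<inter> space M \<in> {Xini -` S \<inter> space M | S. S \<in> sets borel}" using A s0 by auto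
        have h2: "Wseq -` B \<inter> space M \<in> {Wseq -` S \<inter> space M | S. S \<in> sets PB}" using B by auto
        show ?thesis using indep_setD[OF ind h1 h2]
          by (simp add: emeasure_eq_measure ennreal_mult[symmetric] measure_nonneg)
      qed
      also have "\<dots> = emeasure \<mu>0 A * emeasure (distr M PB Wseq) B"
        using A B s0 by (simp add: emeasure_distr \<mu>0_def)
      finally show "emeasure \<mu>0 A * emeasure (distr M PB Wseq) B = emeasure (distr M (borel \<Otimes>\<^sub>M PB) (\<lambda>\<omega>. (Xini \<omega>, Wseq \<omega>))) (A \<times> B)" by simp
    qed (simp add: s0)
    then show ?thesis by (simp add: distr_Wseq)
  qed
  define sw where "sw = (\<lambda>(x::real^'nx, y::nat \<Rightarrow> real^'nw). (x, y \<circ> \<rho> k))"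
  have swm: "sw \<in> measurable (\<mu>0 \<Otimes>\<^sub>M \<Omega>) (\<mu>0 \<Otimes>\<^sub>M \<Omega>)"
    unfolding sw_def using perm_meas[of "\<rho> k"] by measurable
  have inv: "distr (\<mu>0 \<Otimes>\<^sub>M \<Omega>) (\<mu>0 \<Otimes>\<^sub>M \<Omega>) sw = \<mu>0 \<Otimes>\<^sub>M \<Omega>"
  proof -
    have "distr \<mu>0 \<mu>0 (\<lambda>x. x) \<Otimes>\<^sub>M distr \<Omega> \<Omega> (\<lambda>\<omega>. \<omega> \<circ> \<rho> k)
        = distr (\<mu>0 \<Otimes>\<^sub>M \<Omega>) (\<mu>0 \<Otimes>\<^sub>M \<Omega>) (\<lambda>(x, y). (x, y \<circ> \<rho> k))"
      by (rule pair_measure_distr) (auto simp: perm_meas distr_perm[OF inj_\<rho>] intro: O.sigma_finite_measure_axioms)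
    then show ?thesis by (simp add: distr_perm[OF inj_\<rho>] sw_def)
  qed
  have "distr M borel (\<lambda>\<omega>. xdf k (Xini \<omega>) (Wseq \<omega>)) = distr M borel (F \<circ> (\<lambda>\<omega>. (Xini \<omega>, Wseq \<omega>)))"
    by (simp add: F_def comp_def)
  also have "\<dots> = distr (\<mu>0 \<Otimes>\<^sub>M \<Omega>) borel F"
    by (simp add: distr_distr[OF Fm pm, symmetric] jd)
  also have "\<dots> = distr (distr (\<mu>0 \<Otimes>\<^sub>M \<Omega>) (\<mu>0 \<Otimes>\<^sub>M \<Omega>) sw) borel F" by (simp only: inv)
  also have "\<dots> = distr (\<mu>0 \<Otimes>\<^sub>M \<Omega>) borel (F \<circ> sw)" by (rule distr_distr[OF FmL swm])
  also have "F \<circ> sw = (\<lambda>p. Yf k (fst p) (snd p))"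
    by (auto simp: F_def sw_def xdf_perm fun_eq_iff)
  finally show ?thesis by (simp add: \<mu>0_def)
qed

definition "fM j \<omega> = matpow At j *v (E *v (W j \<omega> - m))"

lemma fM_meas[measurable]: "fM j \<in> borel_measurable M"
  unfolding fM_def by (intro mv_meas borel_measurable_diff W_meas borel_measurable_const)

lemma AE_goodM: "AE \<omega> in M. good (Wseq \<omega>)"
  by (rule AE_distrD[OF Wseq_meas\<Omega>]) (unfold distr_Wseq\<Omega>, rule AE_good)

lemma Wm_sq_int: "integrable M (\<lambda>\<omega>. (norm (W j \<omega> - m))^2)"
proof (rule Bochner_Integration.integrable_bound[of _ "\<lambda>\<omega>. 2 * (norm (W j \<omega>))\<^sup>2 + 2 * (norm m)^2"])
  show "integrable M (\<lambda>\<omega>. 2 * (norm (W j \<omega>))\<^sup>2 + 2 * (norm m)^2)" using W_L2 by simp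
  show "AE \<omega> in M. norm ((norm (W j \<omega> - m))^2) \<le> norm (2 * (norm (W j \<omega>))\<^sup>2 + 2 * (norm m)^2)"
  proof (rule AE_I2)
    fix \<omega>
    have "norm (W j \<omega> - m) \<le> norm (W j \<omega>) + norm m" by (rule norm_triangle_ineq4)
    then have "(norm (W j \<omega> - m))^2 \<le> (norm (W j \<omega>) + norm m)^2"
      by (simp add: power_mono)
    also have "\<dots> \<le> 2 * (norm (W j \<omega>))\<^sup>2 + 2 * (norm m)^2"
      using zero_le_power2[of "norm (W j \<omega>) - norm m"] unfolding power2_sum power2_diff by linarith
    finally show "norm ((norm (W j \<omega> - m))^2) \<le> norm (2 * (norm (W j \<omega>))\<^sup>2 + 2 * (norm m)^2)" by simp
  qed
qed measurable

lemma fM_sq_int: "integrable M (\<lambda>\<omega>. ((fM j \<omega>) $ a)^2)"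
proof (rule Bochner_Integration.integrable_bound[of _ "\<lambda>\<omega>. (b j)^2 * (norm (W j \<omega> - m))^2"])
  show "integrable M (\<lambda>\<omega>. (b j)^2 * (norm (W j \<omega> - m))^2)"
    using Wm_sq_int[of j] by (rule integrable_mult_right)
  show "AE \<omega> in M. norm (((fM j \<omega>) $ a)^2) \<le> norm ((b j)^2 * (norm (W j \<omega> - m))^2)"
  proof (rule AE_I2)
    fix \<omega>
    have "\<bar>(fM j \<omega>) $ a\<bar> \<le> b j * norm (W j \<omega> - m)"
      using component_le_norm_cart[of "fM j \<omega>" a] term_bound[of j "W j \<omega> - m"] unfolding fM_def by linarith
    then have "\<bar>(fM j \<omega>) $ a\<bar>^2 \<le> (b j * norm (W j \<omega> - m))^2"
      by (intro power_mono) auto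
    then show "norm (((fM j \<omega>) $ a)^2) \<le> norm ((b j)^2 * (norm (W j \<omega> - m))^2)"
      by (simp add: power_mult_distrib)
  qed
qed measurable

lemma prod_int:
  fixes g h :: "'a \<Rightarrow> real"
  assumes "g \<in> borel_measurable M" "h \<in> borel_measurable M"
    "integrable M (\<lambda>\<omega>. (g \<omega>)^2)" "integrable M (\<lambda>\<omega>. (h \<omega>)^2)"
  shows "integrable M (\<lambda>\<omega>. g \<omega> * h \<omega>)"
proof (rule Bochner_Integration.integrable_bound[of _ "\<lambda>\<omega>. (g \<omega>)^2 + (h \<omega>)^2"])
  show "integrable M (\<lambda>\<omega>. (g \<omega>)^2 + (h \<omega>)^2)" using assms(3,4) by (rule Bochner_Integration.integrable_add)
  show "AE \<omega> in M. norm (g \<omega> * h \<omega>) \<le> norm ((g \<omega>)^2 + (h \<omega>)^2)"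
  proof (rule AE_I2)
    fix \<omega>
    have s2: "2 * \<bar>g \<omega>\<bar> * \<bar>h \<omega>\<bar> \<le> (g \<omega>)^2 + (h \<omega>)^2"
      using sum_squares_bound[of "\<bar>g \<omega>\<bar>" "\<bar>h \<omega>\<bar>"] by simp
    have "0 \<le> \<bar>g \<omega>\<bar> * \<bar>h \<omega>\<bar>" by simp
    then have "\<bar>g \<omega>\<bar> * \<bar>h \<omega>\<bar> \<le> (g \<omega>)^2 + (h \<omega>)^2"
      using s2 by linarith
    then have "\<bar>g \<omega> * h \<omega>\<bar> \<le> (g \<omega>)^2 + (h \<omega>)^2"
      by (simp add: abs_mult)
    then show "norm (g \<omega> * h \<omega>) \<le> norm ((g \<omega>)^2 + (h \<omega>)^2)" by simp
  qed
qed (use assms(1,2) in measurable)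

lemma fM_prod_int: "integrable M (\<lambda>\<omega>. (fM j \<omega>) $ a * (fM l \<omega>) $ c)"
  by (rule prod_int) (measurable, measurable, rule fM_sq_int, rule fM_sq_int)

lemma fM_alt: "fM j \<omega> = (matpow At j ** E) *v (W j \<omega> - m)"
  unfolding fM_def by (simp only: matrix_vector_mul_assoc)

lemma fM_bl: "bounded_linear (\<lambda>v. ((matpow At j ** E) *v v) $ a)"
  by (rule bounded_linear_compose[OF bounded_linear_vec_nth matrix_vector_mul_bounded_linear])

lemma Wm_int: "integrable M (\<lambda>\<omega>. W j \<omega> - m)"
  using W_integrable[of j] by (rule Bochner_Integration.integrable_diff) (rule integrable_const)

lemma fM_int_comp: "integrable M (\<lambda>\<omega>. (fM j \<omega>) $ a)"
  unfolding fM_alt by (rule integrable_bounded_linear[OF fM_bl Wm_int])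

lemma fM_mean0: "(\<integral>\<omega>. (fM j \<omega>) $ a \<partial>M) = 0"
proof -
  have "(\<integral>\<omega>. W j \<omega> - m \<partial>M) = (\<integral>\<omega>. W j \<omega> \<partial>M) - (\<integral>\<omega>. m \<partial>M)"
    using W_integrable[of j] by (rule Bochner_Integration.integral_diff) (rule integrable_const)
  also have "\<dots> = 0" by (simp add: W_integral prob_space)
  finally have z: "(\<integral>\<omega>. W j \<omega> - m \<partial>M) = 0" .
  show ?thesis
    unfolding fM_alt integral_bounded_linear[OF fM_bl Wm_int] z by simp
qed


lemma fM_cross:
  assumes jl: "j \<noteq> l"
  shows "(\<integral>\<omega>. (fM j \<omega>) $ a * (fM l \<omega>) $ c \<partial>M) = 0"
proof -
  define g1 where "g1 = (\<lambda>x. ((matpow At j ** E) *v (x - m)) $ a)"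
  define g2 where "g2 = (\<lambda>x. ((matpow At l ** E) *v (x - m)) $ c)"
  define Y where "Y = (\<lambda>i. if i = j then g1 else g2)"
  have m1: "g1 \<in> borel_measurable borel" unfolding g1_def by measurable
  have m2: "g2 \<in> borel_measurable borel" unfolding g2_def by measurable
  have Ym: "Y i \<in> measurable borel borel" for i
    unfolding Y_def using m1 m2 by simp
  have ind: "indep_vars (\<lambda>_. borel) (\<lambda>i x. Y i (W i x)) UNIV"
    by (rule indep_vars_compose2[OF W_indep Ym])
  then have ind2: "indep_vars (\<lambda>_. borel) (\<lambda>i x. Y i (W i x)) {j, l}"
    by (rule indep_vars_subset) simp
  have Yj: "Y j (W j \<omega>) = (fM j \<omega>) $ a" for \<omega> by (simp add: Y_def g1_def fM_alt)
  have Yl: "Y l (W l \<omega>) = (fM l \<omega>) $ c" for \<omega> using jl by (simp add: Y_def g2_def fM_alt)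
  have int: "integrable M (\<lambda>\<omega>. Y i (W i \<omega>))" if "i \<in> {j, l}" for i
    using that Yj Yl fM_int_comp by auto
  have "(\<integral>\<omega>. (\<Prod>i\<in>{j, l}. Y i (W i \<omega>)) \<partial>M) = (\<Prod>i\<in>{j, l}. \<integral>\<omega>. Y i (W i \<omega>) \<partial>M)"
    by (rule indep_vars_lebesgue_integral[OF _ ind2 int]) auto
  then show ?thesis using jl by (simp add: Yj Yl fM_mean0)
qed

lemma comp_sq_int: "integrable M (\<lambda>\<omega>. ((W j \<omega> - m) $ p)^2)"
proof (rule Bochner_Integration.integrable_bound[OF Wm_sq_int[of j]])
  show "AE \<omega> in M. norm (((W j \<omega> - m) $ p)^2) \<le> norm ((norm (W j \<omega> - m))^2)"
  proof (rule AE_I2)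
    fix \<omega>
    have "\<bar>(W j \<omega> - m) $ p\<bar>^2 \<le> (norm (W j \<omega> - m))^2"
      by (intro power_mono component_le_norm_cart) simp
    then show "norm (((W j \<omega> - m) $ p)^2) \<le> norm ((norm (W j \<omega> - m))^2)" by simp
  qed
qed measurable

lemma mean_\<mu>W: "mean_law \<mu>W = m"
  unfolding mean_law_def \<mu>W_def m_def by (simp add: integral_distr)

lemma cov_entry: "cov_law \<mu>W $ p $ q = (\<integral>\<omega>. (W j \<omega> - m) $ p * (W j \<omega> - m) $ q \<partial>M)"
proof -
  have "cov_law \<mu>W $ p $ q = (\<integral>x. (x $ p - m $ p) * (x $ q - m $ q) \<partial>distr M borel (W 0))"
    unfolding cov_law_def mean_\<mu>W by (simp add: \<mu>W_def)
  also have "\<dots> = (\<integral>x. (x $ p - m $ p) * (x $ q - m $ q) \<partial>distr M borel (W j))"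
    by (simp only: W_ident[of j])
  also have "\<dots> = (\<integral>\<omega>. (W j \<omega> - m) $ p * (W j \<omega> - m) $ q \<partial>M)"
    by (subst integral_distr) (auto intro: W_meas)
  finally show ?thesis .
qed

definition "Mj j = matpow At j ** E ** cov_law \<mu>W ** transpose E ** transpose (matpow At j)"

lemma Mj_alt: "Mj j = (matpow At j ** E) ** cov_law \<mu>W ** transpose (matpow At j ** E)"
  unfolding Mj_def by (simp add: matrix_transpose_mul matrix_mul_assoc)

lemma fM_diag: "(\<integral>\<omega>. (fM j \<omega>) $ a * (fM j \<omega>) $ c \<partial>M) = Mj j $ a $ c"
proof -
  define P where "P = matpow At j ** E"
  define v where "v = (\<lambda>\<omega>. W j \<omega> - m)"
  have vi: "integrable M (\<lambda>\<omega>. v \<omega> $ p * v \<omega> $ q)" for p q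
    unfolding v_def by (rule prod_int) (measurable, measurable, rule comp_sq_int, rule comp_sq_int)
  have "(\<lambda>\<omega>. (fM j \<omega>) $ a * (fM j \<omega>) $ c) = (\<lambda>\<omega>. \<Sum>p\<in>UNIV. \<Sum>q\<in>UNIV. (P $ a $ p * P $ c $ q) * (v \<omega> $ p * v \<omega> $ q))"
    unfolding fM_alt P_def[symmetric]
    by (simp add: matrix_vector_mult_def sum_product mult_ac v_def)
  then have "(\<integral>\<omega>. (fM j \<omega>) $ a * (fM j \<omega>) $ c \<partial>M)
      = (\<Sum>p\<in>UNIV. \<Sum>q\<in>UNIV. (P $ a $ p * P $ c $ q) * (\<integral>\<omega>. v \<omega> $ p * v \<omega> $ q \<partial>M))"
    using vi by (simp add: Bochner_Integration.integral_sum)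
  also have "\<dots> = (\<Sum>p\<in>UNIV. \<Sum>q\<in>UNIV. (P $ a $ p * P $ c $ q) * cov_law \<mu>W $ p $ q)"
    by (simp add: cov_entry[of _ _ j] v_def)
  also have "\<dots> = (\<Sum>p\<in>UNIV. \<Sum>q\<in>UNIV. P $ a $ p * cov_law \<mu>W $ p $ q * P $ c $ q)"
    by (simp add: mult_ac)
  also have "\<dots> = (\<Sum>q\<in>UNIV. \<Sum>p\<in>UNIV. P $ a $ p * cov_law \<mu>W $ p $ q * P $ c $ q)"
    by (rule sum.swap)
  also have "\<dots> = Mj j $ a $ c"
    unfolding Mj_alt P_def[symmetric]
    by (simp add: matrix_matrix_mult_def transpose_def sum_distrib_right)
  finally show ?thesis .
qed

lemma SM_eq: "SS (Wseq \<omega>) = (\<Sum>j. fM j \<omega>)"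
  unfolding SS_def Wseq_def fM_def ..

lemma SM_meas[measurable]: "(\<lambda>\<omega>. SS (Wseq \<omega>)) \<in> borel_measurable M"
  using measurable_compose[OF Wseq_meas SS_meas] by (simp add: comp_def)

lemma Wm_zero: "(\<integral>\<omega>. W j \<omega> - m \<partial>M) = 0"
proof -
  have "(\<integral>\<omega>. W j \<omega> - m \<partial>M) = (\<integral>\<omega>. W j \<omega> \<partial>M) - (\<integral>\<omega>. m \<partial>M)"
    using W_integrable[of j] by (rule Bochner_Integration.integral_diff) (rule integrable_const)
  also have "\<dots> = 0" by (simp add: W_integral prob_space)
  finally show ?thesis .
qed

lemma fM_partial: "(\<integral>\<omega>. (\<Sum>j<n. fM j \<omega>) $ a * (\<Sum>l<n. fM l \<omega>) $ c \<partial>M) = (\<Sum>j<n. Mj j) $ a $ c"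
proof -
  have eq: "(\<lambda>\<omega>. (\<Sum>j<n. fM j \<omega>) $ a * (\<Sum>l<n. fM l \<omega>) $ c)
      = (\<lambda>\<omega>. \<Sum>j<n. \<Sum>l<n. (fM j \<omega>) $ a * (fM l \<omega>) $ c)"
    by (simp add: sum_component sum_product)
  have "(\<integral>\<omega>. (\<Sum>j<n. \<Sum>l<n. (fM j \<omega>) $ a * (fM l \<omega>) $ c) \<partial>M)
      = (\<Sum>j<n. \<Sum>l<n. \<integral>\<omega>. (fM j \<omega>) $ a * (fM l \<omega>) $ c \<partial>M)"
    by (simp add: Bochner_Integration.integral_sum Bochner_Integration.integrable_sum fM_prod_int)
  also have "\<dots> = (\<Sum>j<n. \<Sum>l<n. if j = l then Mj j $ a $ c else 0)"
    by (intro sum.cong refl) (auto simp: fM_diag fM_cross)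
  also have "\<dots> = (\<Sum>j<n. Mj j $ a $ c)" by simp
  also have "\<dots> = (\<Sum>j<n. Mj j) $ a $ c" by (simp add: sum_component)
  finally show ?thesis unfolding eq .
qed

definition "Dd \<omega> = (\<Sum>j. b j * norm (W j \<omega> - m))^2"

lemma Dd_meas[measurable]: "Dd \<in> borel_measurable M"
  unfolding Dd_def suminf_eq_lim by measurable

lemma Dd_int: "integrable M Dd"
  unfolding integrable_iff_bounded
proof
  show "Dd \<in> borel_measurable M" by (rule Dd_meas)
  have "(\<integral>\<^sup>+ \<omega>. ennreal (norm (Dd \<omega>)) \<partial>M) = (\<integral>\<^sup>+ \<omega>. (\<Sum>j. ennreal (b j * norm (W j \<omega> - m)))^2 \<partial>M)"
  proof (rule nn_integral_cong_AE)
    show "AE \<omega> in M. ennreal (norm (Dd \<omega>)) = (\<Sum>j. ennreal (b j * norm (W j \<omega> - m)))^2"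
      using AE_goodM
    proof (rule AE_mp, intro AE_I2 impI)
      fix \<omega> assume g: "good (Wseq \<omega>)"
      then have sm: "summable (\<lambda>j. b j * norm (W j \<omega> - m))" by (simp add: good_def Wseq_def)
      have "(\<Sum>j. ennreal (b j * norm (W j \<omega> - m))) = ennreal (\<Sum>j. b j * norm (W j \<omega> - m))"
        by (rule suminf_ennreal2[OF _ sm]) (simp add: b_nonneg)
      moreover have "0 \<le> (\<Sum>j. b j * norm (W j \<omega> - m))"
        by (intro suminf_nonneg sm) (simp add: b_nonneg)
      ultimately show "ennreal (norm (Dd \<omega>)) = (\<Sum>j. ennreal (b j * norm (W j \<omega> - m)))^2"
        by (simp add: Dd_def ennreal_power)
    qed
  qed
  also have "\<dots> \<le> (\<Sum>j. ennreal (b j))^2 * \<sigma>2"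
    by (rule G_bound) (auto simp: b_nonneg \<sigma>2_j)
  also have "\<dots> < \<infinity>"
  proof -
    have "(\<Sum>j. ennreal (b j)) = ennreal (C * mnorm E * r^0 / (1 - r))"
      using b_sums[of 0] b_nonneg by (simp add: sums_iff suminf_ennreal2)
    then show ?thesis using \<sigma>2_fin
      by (simp add: ennreal_mult_less_top power_less_top_ennreal)
  qed
  finally show "(\<integral>\<^sup>+ \<omega>. ennreal (norm (Dd \<omega>)) \<partial>M) < \<infinity>" .
qed

lemma fM_lim: "(\<lambda>n. (\<Sum>j<n. Mj j) $ a $ c) \<longlonglongrightarrow> (\<integral>\<omega>. SS (Wseq \<omega>) $ a * SS (Wseq \<omega>) $ c \<partial>M)"
proof -
  have "(\<lambda>n. \<integral>\<omega>. (\<Sum>j<n. fM j \<omega>) $ a * (\<Sum>l<n. fM l \<omega>) $ c \<partial>M)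
      \<longlonglongrightarrow> (\<integral>\<omega>. SS (Wseq \<omega>) $ a * SS (Wseq \<omega>) $ c \<partial>M)"
  proof (rule integral_dominated_convergence[where w=Dd])
    show "(\<lambda>\<omega>. SS (Wseq \<omega>) $ a * SS (Wseq \<omega>) $ c) \<in> borel_measurable M" by measurable
    show "(\<lambda>\<omega>. (\<Sum>j<n. fM j \<omega>) $ a * (\<Sum>l<n. fM l \<omega>) $ c) \<in> borel_measurable M" for n
      by measurable
    show "integrable M Dd" by (rule Dd_int)
    show "AE \<omega> in M. (\<lambda>n. (\<Sum>j<n. fM j \<omega>) $ a * (\<Sum>l<n. fM l \<omega>) $ c)
        \<longlonglongrightarrow> SS (Wseq \<omega>) $ a * SS (Wseq \<omega>) $ c"
      using AE_goodM
    proof (rule AE_mp, intro AE_I2 impI)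
      fix \<omega> assume g: "good (Wseq \<omega>)"
      have "summable (\<lambda>j. fM j \<omega>)"
        using summable_norm_cancel[OF good_summable[OF g]] by (simp add: Wseq_def fM_def)
      then have "(\<lambda>n. \<Sum>j<n. fM j \<omega>) \<longlonglongrightarrow> SS (Wseq \<omega>)"
        unfolding SM_eq by (rule summable_LIMSEQ)
      then show "(\<lambda>n. (\<Sum>j<n. fM j \<omega>) $ a * (\<Sum>l<n. fM l \<omega>) $ c) \<longlonglongrightarrow> SS (Wseq \<omega>) $ a * SS (Wseq \<omega>) $ c"
        by (intro tendsto_mult tendsto_vec_nth)
    qed
    show "AE \<omega> in M. norm ((\<Sum>j<n. fM j \<omega>) $ a * (\<Sum>l<n. fM l \<omega>) $ c) \<le> Dd \<omega>" for n
      using AE_goodM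
    proof (rule AE_mp, intro AE_I2 impI)
      fix \<omega> assume g: "good (Wseq \<omega>)"
      then have sm: "summable (\<lambda>j. b j * norm (W j \<omega> - m))" by (simp add: good_def Wseq_def)
      define T where "T = (\<Sum>j<n. fM j \<omega>)"
      have "norm T \<le> (\<Sum>j<n. norm (fM j \<omega>))" unfolding T_def by (rule norm_sum)
      also have "\<dots> \<le> (\<Sum>j<n. b j * norm (W j \<omega> - m))"
        by (intro sum_mono) (simp add: fM_def term_bound)
      also have "\<dots> \<le> (\<Sum>j. b j * norm (W j \<omega> - m))"
        by (rule sum_le_suminf[OF sm]) (auto simp: b_nonneg)
      finally have nT: "norm T \<le> (\<Sum>j. b j * norm (W j \<omega> - m))" .
      have s0: "0 \<le> (\<Sum>j. b j * norm (W j \<omega> - m))" by (intro suminf_nonneg sm) (simp add: b_nonneg)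
      have "\<bar>T $ a * T $ c\<bar> \<le> norm T * norm T"
        unfolding abs_mult by (intro mult_mono component_le_norm_cart) auto
      also have "\<dots> \<le> Dd \<omega>"
        unfolding Dd_def power2_eq_square by (intro mult_mono nT) (use s0 in auto)
      finally show "norm ((\<Sum>j<n. fM j \<omega>) $ a * (\<Sum>l<n. fM l \<omega>) $ c) \<le> Dd \<omega>"
        by (simp add: T_def)
    qed
  qed
  then show ?thesis by (simp only: fM_partial)
qed

lemma Mj_sums: "(\<lambda>j. Mj j) sums (\<chi> a c. \<integral>\<omega>. SS (Wseq \<omega>) $ a * SS (Wseq \<omega>) $ c \<partial>M)"
  unfolding sums_def
proof (intro vec_tendstoI)
  fix a c
  show "(\<lambda>n. (\<Sum>j<n. Mj j) $ a $ c) \<longlonglongrightarrow> (\<chi> a c. \<integral>\<omega>. SS (Wseq \<omega>) $ a * SS (Wseq \<omega>) $ c \<partial>M) $ a $ c"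
    using fM_lim[of a c] by simp
qed

lemma fM_vec_int: "integrable M (fM j)"
  unfolding fM_alt[abs_def] by (rule integrable_bounded_linear[OF matrix_vector_mul_bounded_linear Wm_int])

lemma fM_vec_zero: "(\<integral>\<omega>. fM j \<omega> \<partial>M) = 0"
  unfolding fM_alt[abs_def] integral_bounded_linear[OF matrix_vector_mul_bounded_linear Wm_int] Wm_zero by simp

lemma SM_int_zero: "integrable M (\<lambda>\<omega>. SS (Wseq \<omega>))" "(\<integral>\<omega>. SS (Wseq \<omega>) \<partial>M) = 0"
proof -
  define K1 where "K1 = (\<integral>\<omega>. norm (W 0 \<omega> - m) \<partial>M)"
  have K1j: "(\<integral>\<omega>. norm (W j \<omega> - m) \<partial>M) = K1" for j
  proof -
    have "(\<integral>\<omega>. norm (W j \<omega> - m) \<partial>M) = (\<integral>x. norm (x - m) \<partial>distr M borel (W j))"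
      by (subst integral_distr) (auto intro: W_meas)
    also have "\<dots> = (\<integral>x. norm (x - m) \<partial>distr M borel (W 0))" by (simp only: W_ident[of j])
    also have "\<dots> = K1" unfolding K1_def by (subst integral_distr) (auto intro: W_meas)
    finally show ?thesis .
  qed
  have a1: "AE \<omega> in M. summable (\<lambda>i. norm (fM i \<omega>))"
    using AE_goodM by (rule AE_mp) (auto intro!: AE_I2 dest: good_summable simp: Wseq_def fM_def)
  have a2: "summable (\<lambda>i. \<integral>\<omega>. norm (fM i \<omega>) \<partial>M)"
  proof (rule summable_comparison_test'[where N=0])
    show "summable (\<lambda>i. b i * K1)"
      using b_sums[of 0] by (intro summable_mult2) (simp add: sums_iff)
    show "norm (\<integral>\<omega>. norm (fM i \<omega>) \<partial>M) \<le> b i * K1" for i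
    proof -
      have "(\<integral>\<omega>. norm (fM i \<omega>) \<partial>M) \<le> (\<integral>\<omega>. b i * norm (W i \<omega> - m) \<partial>M)"
        by (intro integral_mono integrable_norm fM_vec_int integrable_mult_right Wm_int)
          (simp add: fM_def term_bound)
      also have "\<dots> = b i * K1" by (simp add: K1j)
      finally show ?thesis by simp
    qed
  qed
  have "integrable M (\<lambda>\<omega>. \<Sum>i. fM i \<omega>)"
    by (rule integrable_suminf[OF fM_vec_int a1 a2])
  then show "integrable M (\<lambda>\<omega>. SS (Wseq \<omega>))" by (simp add: SM_eq)
  have "(\<integral>\<omega>. (\<Sum>i. fM i \<omega>) \<partial>M) = (\<Sum>i. \<integral>\<omega>. fM i \<omega> \<partial>M)"
    by (rule integral_suminf[OF fM_vec_int a1 a2])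
  then show "(\<integral>\<omega>. SS (Wseq \<omega>) \<partial>M) = 0" by (simp add: SM_eq fM_vec_zero)
qed
end


lemma conv_from_coupling:
  fixes Y :: "nat \<Rightarrow> 'a \<Rightarrow> 'b::euclidean_space" and Z :: "'a \<Rightarrow> 'b"
  assumes M: "prob_space M"
    and Ym: "\<And>k. Y k \<in> borel_measurable M" and Zm: "Z \<in> borel_measurable M"
    and ae: "AE \<omega> in M. (\<lambda>k. Y k \<omega>) \<longlonglongrightarrow> Z \<omega>"
    and l2: "(\<lambda>k. \<integral>\<^sup>+ \<omega>. ennreal ((dist (Y k \<omega>) (Z \<omega>))^2) \<partial>M) \<longlonglongrightarrow> 0"
  shows "weak_conv_law (\<lambda>k. distr M borel (Y k)) (distr M borel Z)
       \<and> W2_conv_law (\<lambda>k. distr M borel (Y k)) (distr M borel Z)"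
proof
  interpret prob_space M by (rule M)
  show "weak_conv_law (\<lambda>k. distr M borel (Y k)) (distr M borel Z)"
    unfolding weak_conv_law_def
  proof (intro allI impI)
    fix f :: "'b \<Rightarrow> real"
    assume f: "continuous_on UNIV f \<and> bounded (range f)"
    then have fm: "f \<in> borel_measurable borel" by (intro borel_measurable_continuous_onI) simp
    from f obtain B where B: "\<And>x. norm (f x) \<le> B"
      unfolding bounded_iff by auto
    have ic: "isCont f x" for x using f by (simp add: continuous_on_eq_continuous_at)
    have "(\<lambda>k. \<integral>\<omega>. f (Y k \<omega>) \<partial>M) \<longlonglongrightarrow> (\<integral>\<omega>. f (Z \<omega>) \<partial>M)"
    proof (rule integral_dominated_convergence[where w="\<lambda>_. B"])
      show "(\<lambda>\<omega>. f (Z \<omega>)) \<in> borel_measurable M" using fm Zm by measurable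
      show "(\<lambda>\<omega>. f (Y k \<omega>)) \<in> borel_measurable M" for k using fm Ym by measurable
      show "integrable M (\<lambda>_. B)" by simp
      show "AE \<omega> in M. (\<lambda>k. f (Y k \<omega>)) \<longlonglongrightarrow> f (Z \<omega>)"
        using ae by eventually_elim (rule isCont_tendsto_compose[OF ic])
      show "AE \<omega> in M. norm (f (Y k \<omega>)) \<le> B" for k using B by simp
    qed
    then show "(\<lambda>k. \<integral>x. f x \<partial>distr M borel (Y k)) \<longlonglongrightarrow> (\<integral>x. f x \<partial>distr M borel Z)"
      using fm Ym Zm by (simp add: integral_distr)
  qed
  show "W2_conv_law (\<lambda>k. distr M borel (Y k)) (distr M borel Z)"
    unfolding W2_conv_law_def
  proof (rule tendsto_sandwich[OF _ _ tendsto_const l2])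
    show "\<forall>\<^sub>F k in sequentially. 0 \<le> wasserstein2_sq (distr M borel (Y k)) (distr M borel Z)"
      by simp
    show "\<forall>\<^sub>F k in sequentially. wasserstein2_sq (distr M borel (Y k)) (distr M borel Z)
        \<le> (\<integral>\<^sup>+ \<omega>. ennreal ((dist (Y k \<omega>) (Z \<omega>))^2) \<partial>M)"
    proof (rule always_eventually, rule allI)
      fix k
      define \<pi> where "\<pi> = distr M (borel \<Otimes>\<^sub>M borel) (\<lambda>\<omega>. (Y k \<omega>, Z \<omega>))"
      have pm: "(\<lambda>\<omega>. (Y k \<omega>, Z \<omega>)) \<in> measurable M (borel \<Otimes>\<^sub>M borel)"
        using Ym Zm by measurable
      have "\<pi> \<in> couplings (distr M borel (Y k)) (distr M borel Z)"
        unfolding couplings_def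
      proof (intro CollectI conjI)
        show "prob_space \<pi>" unfolding \<pi>_def by (rule prob_space_distr[OF pm])
        show "sets \<pi> = sets (borel \<Otimes>\<^sub>M borel)" by (simp add: \<pi>_def)
        show "distr \<pi> borel fst = distr M borel (Y k)"
          unfolding \<pi>_def by (subst distr_distr[OF measurable_fst pm]) (simp add: comp_def)
        show "distr \<pi> borel snd = distr M borel Z"
          unfolding \<pi>_def by (subst distr_distr[OF measurable_snd pm]) (simp add: comp_def)
      qed
      then have "wasserstein2_sq (distr M borel (Y k)) (distr M borel Z)
          \<le> (\<integral>\<^sup>+ p. ennreal ((dist (fst p) (snd p))\<^sup>2) \<partial>\<pi>)"
        unfolding wasserstein2_sq_def by (rule INF_lower)
      also have "\<dots> = (\<integral>\<^sup>+ \<omega>. ennreal ((dist (Y k \<omega>) (Z \<omega>))^2) \<partial>M)"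
        unfolding \<pi>_def
        by (subst nn_integral_distr[OF pm]) (simp_all add: measurable_distr_eq1)
      finally show "wasserstein2_sq (distr M borel (Y k)) (distr M borel Z)
          \<le> (\<integral>\<^sup>+ \<omega>. ennreal ((dist (Y k \<omega>) (Z \<omega>))^2) \<partial>M)" .
    qed
  qed
qed


lemma schur_inv:
  fixes X :: "real^'n^'n"
  assumes st: "schur_stable X"
  shows "invertible (mat 1 - X)"
proof -
  have "\<forall>x. (mat 1 - X) *v x = 0 \<longrightarrow> x = 0"
  proof (intro allI impI, rule ccontr)
    fix x :: "real^'n"
    assume h: "(mat 1 - X) *v x = 0" and x0: "x \<noteq> 0"
    have Xx: "X *v x = x" using h by (simp add: matrix_vector_mult_diff_rdistrib)
    define u where "u = (\<chi> i. complex_of_real (x $ i))"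
    have "u \<noteq> 0"
    proof
      assume "u = 0"
      then have "x = 0" by (simp add: u_def Finite_Cartesian_Product.vec_eq_iff)
      with x0 show False by simp
    qed
    moreover have "cmat X *v u = (\<chi> i. 1 * u $ i)"
    proof (subst Finite_Cartesian_Product.vec_eq_iff, intro allI)
      fix i
      have "(cmat X *v u) $ i = complex_of_real ((X *v x) $ i)"
        by (simp add: cmat_def u_def matrix_vector_mult_def)
      then show "(cmat X *v u) $ i = (\<chi> i. 1 * u $ i) $ i" by (simp add: Xx u_def)
    qed
    ultimately have "cmod 1 < 1" using st unfolding schur_stable_def by blast
    then show False by simp
  qed
  then have "\<exists>B. B ** (mat 1 - X) = mat 1" by (simp add: matrix_left_invertible_ker)
  then show ?thesis by (simp add: invertible_left_inverse)
qed

lemma schur_geo: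
  fixes X :: "real^'n^'n"
  assumes st: "schur_stable X"
  shows "\<exists>C r. 0 < r \<and> r < 1 \<and> 0 \<le> C \<and> (\<forall>k x. norm (matpow X k *v x) \<le> C * r^k * norm x)"
proof -
  obtain C0 r where r: "0 < r" "r < 1" and ent: "\<And>k i j. \<bar>matpow X k $ i $ j\<bar> \<le> C0 * r ^ k"
    using schur_bound[OF st] by blast
  define C where "C = real CARD('n) * real CARD('n) * max C0 0"
  have "norm (matpow X k *v x) \<le> C * r^k * norm x" for k x
  proof -
    have "mnorm (matpow X k) \<le> (\<Sum>i\<in>(UNIV::'n set). \<Sum>j\<in>(UNIV::'n set). max C0 0 * r^k)"
      unfolding mnorm_def
      by (intro sum_mono) (use ent r in \<open>force intro: order_trans[OF ent] mult_right_mono\<close>)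
    also have "\<dots> = C * r^k" by (simp add: C_def)
    finally have "mnorm (matpow X k) \<le> C * r^k" .
    then have "mnorm (matpow X k) * norm x \<le> C * r^k * norm x" by (rule mult_right_mono) simp
    with norm_mv_le[of "matpow X k" x] show ?thesis by linarith
  qed
  moreover have "0 \<le> C" by (simp add: C_def)
  ultimately show ?thesis using r by blast
qed

theorem lemma4:
  fixes A :: "real^'nx^'nx" and B :: "real^'nu^'nx" and E :: "real^'nw^'nx"
    and Q :: "real^'nx^'nx" and R :: "real^'nu^'nu"
    and P :: "real^'nx^'nx" and K :: "real^'nx^'nu" and At :: "real^'nx^'nx"
    and G :: "real^'nw^'nx" and F :: "real^'nw^'nu" and Ft :: "real^'nw^'nx"
    and M :: "'a measure" and Xini :: "'a \<Rightarrow> real^'nx" and W :: "nat \<Rightarrow> 'a \<Rightarrow> real^'nw"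
    and Xd :: "nat \<Rightarrow> 'a \<Rightarrow> real^'nx" and Ud :: "nat \<Rightarrow> 'a \<Rightarrow> real^'nu"
    and Xs :: "'a \<Rightarrow> real^'nx" and Us :: "'a \<Rightarrow> real^'nu"
  assumes Q_psd: "psd Q" and R_pd: "pd R"
    and stab: "stabilizable A B" and detect: "detectable A (msqrt Q)"
    \<comment> \<open>P: the stabilizing symmetric PSD solution of the DARE\<close>
    and P_psd: "psd P"
    and P_dare: "P = Q + transpose A ** (P - P ** B ** matrix_inv (R + transpose B ** P ** B) ** transpose B ** P) ** A"
    and K_def: "K = - (matrix_inv (R + transpose B ** P ** B) ** transpose B ** P ** A)"
    and At_def: "At = A + B ** K"
    and P_stabilizing: "schur_stable At"
    and G_eq: "G = transpose At ** (P ** E + G)"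
    and F_def: "F = - (matrix_inv (R + transpose B ** P ** B) ** transpose B ** (P ** E + G))"
    and Ft_def: "Ft = B ** F + E"
    \<comment> \<open>probabilistic setting\<close>
    and M: "prob_space M"
    and Xini_meas: "Xini \<in> borel_measurable M"
    and Xini_L2: "integrable M (\<lambda>\<omega>. (norm (Xini \<omega>))\<^sup>2)"
    and W_meas: "\<And>k. W k \<in> borel_measurable M"
    and W_L2: "\<And>k. integrable M (\<lambda>\<omega>. (norm (W k \<omega>))\<^sup>2)"
    and W_ident: "\<And>k. distr M borel (W k) = distr M borel (W 0)"
    and W_indep: "prob_space.indep_vars M (\<lambda>_. borel) W UNIV"
    and Xini_indep: "prob_space.indep_set M {Xini -` S \<inter> space M | S. S \<in> sets borel}
        {(\<lambda>\<omega> k. W k \<omega>) -` S \<inter> space M | S. S \<in> sets (PiM UNIV (\<lambda>_. borel))}"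
    \<comment> \<open>the overtakingly optimal trajectory\<close>
    and Xd_0: "Xd 0 = Xini"
    and Ud_def: "\<And>k \<omega>. Ud k \<omega> = K *v Xd k \<omega> + F *v (\<integral>\<omega>'. W 0 \<omega>' \<partial>M)"
    and Xd_Suc: "\<And>k \<omega>. Xd (Suc k) \<omega> = A *v Xd k \<omega> + B *v Ud k \<omega> + E *v W k \<omega>"
    \<comment> \<open>the limit random variables\<close>
    and Xs_def: "\<And>\<omega>. Xs \<omega> = matrix_inv (mat 1 - At) ** Ft *v (\<integral>\<omega>'. W 0 \<omega>' \<partial>M)
        + (\<Sum>j. matpow At j *v (E *v (W j \<omega> - (\<integral>\<omega>'. W 0 \<omega>' \<partial>M))))"
    and Us_def: "\<And>\<omega>. Us \<omega> = (K ** matrix_inv (mat 1 - At) ** Ft + F) *v (\<integral>\<omega>'. W 0 \<omega>' \<partial>M)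
        + K *v (\<Sum>j. matpow At j *v (E *v (W j \<omega> - (\<integral>\<omega>'. W 0 \<omega>' \<partial>M))))"
  shows "weak_conv_law (\<lambda>k. distr M borel (Xd k)) (distr M borel Xs)
       \<and> weak_conv_law (\<lambda>k. distr M borel (Ud k)) (distr M borel Us)
       \<and> W2_conv_law (\<lambda>k. distr M borel (Xd k)) (distr M borel Xs)
       \<and> W2_conv_law (\<lambda>k. distr M borel (Ud k)) (distr M borel Us)
       \<and> mean_law (distr M borel Xs) = matrix_inv (mat 1 - At) ** Ft *v (\<integral>\<omega>'. W 0 \<omega>' \<partial>M)
       \<and> summable (\<lambda>j. matpow At j ** E ** cov_law (distr M borel (W 0)) ** transpose E ** transpose (matpow At j))
       \<and> cov_law (distr M borel Xs) =
           (\<Sum>j. matpow At j ** E ** cov_law (distr M borel (W 0)) ** transpose E ** transpose (matpow At j))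
       \<and> (\<forall>(N :: 'b measure) (Xb :: 'b \<Rightarrow> real^'nx).
            prob_space N \<and> Xb \<in> borel_measurable N \<and> distr N borel Xb = distr M borel Xs \<longrightarrow>
            stationary_pair A B E (distr M borel (W 0)) N Xb
              (\<lambda>\<omega>. K *v Xb \<omega> + F *v (\<integral>\<omega>'. W 0 \<omega>' \<partial>M)))"
  proof -
  interpret prob_space M by (rule M)
  obtain C r where r0: "0 < r" and r1: "r < 1" and C0: "0 \<le> C"
    and geo: "\<And>k x. norm (matpow At k *v x) \<le> C * r^k * norm x"
    using schur_geo[OF P_stabilizing] by blast
  have inv: "invertible (mat 1 - At)" by (rule schur_inv[OF P_stabilizing])
  interpret L: lqs2 M W At E Ft C r
    by unfold_locales (use W_meas W_L2 W_ident W_indep r0 r1 C0 geo inv in auto)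
  define m where "m = (\<integral>\<omega>'. W 0 \<omega>' \<partial>M)"
  have Lm: "L.m = m" by (simp add: L.m_def m_def)
  have Xs_eq: "Xs \<omega> = L.\<Phi> (L.Wseq \<omega>)" for \<omega>
    by (simp add: Xs_def L.\<Phi>_def L.cc_def L.Minv_def L.SS_def L.Wseq_def Lm m_def)
  have Xs_eq': "Xs \<omega> = L.cc + L.SS (L.Wseq \<omega>)" for \<omega>
    by (simp add: Xs_eq L.\<Phi>_def)
  have Xsm[measurable]: "Xs \<in> borel_measurable M"
    using measurable_compose[OF L.Wseq_meas L.\<Phi>_meas] by (simp add: comp_def Xs_eq[abs_def])
  have lawXs: "distr M borel Xs = distr L.\<Omega> borel L.\<Phi>"
  proof -
    have "distr M borel Xs = distr M borel (L.\<Phi> \<circ> L.Wseq)" by (simp add: comp_def Xs_eq[abs_def])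
    also have "\<dots> = distr (distr M L.PB L.Wseq) borel L.\<Phi>"
      by (rule distr_distr[OF L.\<Phi>_meas L.Wseq_meas, symmetric])
    finally show ?thesis by (simp add: L.distr_Wseq)
  qed
  have alg: "A *v x + B *v (K *v x + F *v m) + E *v w = At *v x + Ft *v m + E *v (w - m)" for x w
    by (simp add: At_def Ft_def matrix_vector_mult_add_rdistrib matrix_vector_right_distrib
        matrix_vector_mul_assoc[symmetric] matrix_vector_mult_diff_distrib algebra_simps)
  have Xd_eq: "Xd k \<omega> = L.xdf k (Xini \<omega>) (L.Wseq \<omega>)" for k \<omega>
  proof (induction k)
    case 0 then show ?case by (simp add: Xd_0 L.xdf_0)
  next
    case (Suc k)
    show ?case
      by (simp add: Xd_Suc Ud_def L.xdf_Suc Suc alg[unfolded m_def] Lm[unfolded m_def] L.Wseq_def)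
  qed
  define \<mu>0 where "\<mu>0 = distr M borel Xini"
  define \<Lambda> where "\<Lambda> = \<mu>0 \<Otimes>\<^sub>M L.\<Omega>"
  interpret P0: prob_space \<mu>0 unfolding \<mu>0_def by (rule prob_space_distr) (rule Xini_meas)
  interpret O: prob_space L.\<Omega> by (rule L.prob_\<Omega>)
  interpret PP: pair_prob_space \<mu>0 L.\<Omega> ..
  have pL: "prob_space \<Lambda>" unfolding \<Lambda>_def by unfold_locales
  have s0: "sets \<mu>0 = sets borel" by (simp add: \<mu>0_def)
  have sL: "sets \<Lambda> = sets (borel \<Otimes>\<^sub>M L.PB)"
    unfolding \<Lambda>_def using s0 L.sets_\<Omega> by (rule sets_pair_measure_cong)
  have ind: "indep_set {Xini -` S \<inter> space M | S. S \<in> sets borel} {L.Wseq -` S \<inter> space M | S. S \<in> sets L.PB}"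
    using Xini_indep by (simp add: L.Wseq_def[abs_def])
  define Y where "Y = (\<lambda>k p. L.Yf k (fst p) (snd p))"
  define Z where "Z = (\<lambda>p::(real^'nx) \<times> (nat \<Rightarrow> real^'nw). L.\<Phi> (snd p))"
  have Ym: "Y k \<in> borel_measurable \<Lambda>" for k
  proof -
    have "Y k \<in> borel_measurable (borel \<Otimes>\<^sub>M L.PB)" unfolding Y_def L.Yf_def by measurable
    then show ?thesis by (simp add: measurable_cong_sets[OF sL refl])
  qed
  have Zm: "Z \<in> borel_measurable \<Lambda>"
  proof -
    have "Z \<in> borel_measurable (borel \<Otimes>\<^sub>M L.PB)" unfolding Z_def by measurable
    then show ?thesis by (simp add: measurable_cong_sets[OF sL refl])
  qed
  have lawXd: "distr M borel (Xd k) = distr \<Lambda> borel (Y k)" for k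
  proof -
    have "distr M borel (Xd k) = distr M borel (\<lambda>\<omega>. L.xdf k (Xini \<omega>) (L.Wseq \<omega>))"
      by (simp add: Xd_eq[abs_def])
    also have "\<dots> = distr \<Lambda> borel (Y k)"
      unfolding L.Xd_law[OF Xini_meas ind] \<Lambda>_def \<mu>0_def Y_def ..
    finally show ?thesis .
  qed
  have dsnd: "distr \<Lambda> L.\<Omega> snd = L.\<Omega>"
    unfolding \<Lambda>_def by (rule distr_pair_snd'[OF P0.prob_space_axioms O.sigma_finite_measure_axioms])
  have sndm: "snd \<in> measurable \<Lambda> L.\<Omega>" unfolding \<Lambda>_def by simp
  have lawXs2: "distr M borel Xs = distr \<Lambda> borel Z"
  proof -
    have "distr \<Lambda> borel Z = distr \<Lambda> borel (L.\<Phi> \<circ> snd)" by (simp add: Z_def comp_def)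
    also have "\<dots> = distr (distr \<Lambda> L.\<Omega> snd) borel L.\<Phi>"
      by (rule distr_distr[OF L.\<Phi>_meas\<Omega> sndm, symmetric])
    finally show ?thesis by (simp add: dsnd lawXs)
  qed
  have aeg: "AE p in \<Lambda>. L.good (snd p)"
    by (rule AE_distrD[OF sndm]) (unfold dsnd, rule L.AE_good)
  have aeY: "AE p in \<Lambda>. (\<lambda>k. Y k p) \<longlonglongrightarrow> Z p"
    using aeg by (rule AE_mp) (auto intro!: AE_I2 L.Y_conv simp: Y_def Z_def)
  have fin0: "(\<integral>\<^sup>+ x. ennreal ((norm x)^2) \<partial>\<mu>0) < \<infinity>"
  proof -
    have "(\<integral>\<^sup>+ x. ennreal ((norm x)^2) \<partial>\<mu>0) = (\<integral>\<^sup>+ \<omega>. ennreal ((norm (Xini \<omega>))^2) \<partial>M)"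
      unfolding \<mu>0_def by (rule nn_integral_distr) (auto intro: Xini_meas)
    also have "\<dots> < \<infinity>" using integrableD(2)[OF Xini_L2] by (simp add: less_top)
    finally show ?thesis .
  qed
  have l2Y: "(\<lambda>k. \<integral>\<^sup>+ p. ennreal ((dist (Y k p) (Z p))^2) \<partial>\<Lambda>) \<longlonglongrightarrow> 0"
    using L.Y_L2[OF P0.prob_space_axioms s0 fin0] unfolding Y_def Z_def \<Lambda>_def .
  have convX: "weak_conv_law (\<lambda>k. distr \<Lambda> borel (Y k)) (distr \<Lambda> borel Z)
       \<and> W2_conv_law (\<lambda>k. distr \<Lambda> borel (Y k)) (distr \<Lambda> borel Z)"
    by (rule conv_from_coupling[OF pL Ym Zm aeY l2Y])
  define h where "h = (\<lambda>x. K *v x + F *v m)"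
  have hm: "h \<in> borel_measurable borel" unfolding h_def by measurable
  have Ud_eq: "Ud k = h \<circ> Xd k" for k by (simp add: fun_eq_iff Ud_def h_def m_def)
  have Us_eq: "Us = h \<circ> Xs"
    by (simp add: fun_eq_iff Us_def Xs_def h_def m_def matrix_vector_mult_add_rdistrib
        matrix_vector_right_distrib matrix_vector_mul_assoc[symmetric] algebra_simps)
  have Xdm: "Xd k \<in> borel_measurable M" for k
    using measurable_compose[OF _ L.Wseq_meas] Xini_meas
    unfolding Xd_eq[abs_def] L.xdf_def by measurable
  have lawUd: "distr M borel (Ud k) = distr \<Lambda> borel (h \<circ> Y k)" for k
  proof -
    have "distr M borel (Ud k) = distr (distr M borel (Xd k)) borel h"
      unfolding Ud_eq by (rule distr_distr[OF hm Xdm, symmetric])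
    also have "\<dots> = distr (distr \<Lambda> borel (Y k)) borel h" by (simp only: lawXd)
    also have "\<dots> = distr \<Lambda> borel (h \<circ> Y k)" by (rule distr_distr[OF hm Ym])
    finally show ?thesis .
  qed
  have lawUs: "distr M borel Us = distr \<Lambda> borel (h \<circ> Z)"
  proof -
    have "distr M borel Us = distr (distr M borel Xs) borel h"
      unfolding Us_eq by (rule distr_distr[OF hm Xsm, symmetric])
    also have "\<dots> = distr (distr \<Lambda> borel Z) borel h" by (simp only: lawXs2)
    also have "\<dots> = distr \<Lambda> borel (h \<circ> Z)" by (rule distr_distr[OF hm Zm])
    finally show ?thesis .
  qed
  have convU: "weak_conv_law (\<lambda>k. distr \<Lambda> borel (h \<circ> Y k)) (distr \<Lambda> borel (h \<circ> Z))
       \<and> W2_conv_law (\<lambda>k. distr \<Lambda> borel (h \<circ> Y k)) (distr \<Lambda> borel (h \<circ> Z))"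
  proof (rule conv_from_coupling[OF pL])
    show "h \<circ> Y k \<in> borel_measurable \<Lambda>" for k by (rule measurable_comp[OF Ym hm])
    show "h \<circ> Z \<in> borel_measurable \<Lambda>" by (rule measurable_comp[OF Zm hm])
    have ch: "isCont h x" for x unfolding h_def by (intro continuous_intros)
    show "AE p in \<Lambda>. (\<lambda>k. (h \<circ> Y k) p) \<longlonglongrightarrow> (h \<circ> Z) p"
      using aeY by (rule AE_mp) (auto intro!: AE_I2 isCont_tendsto_compose[OF ch])
    have bnd: "(\<integral>\<^sup>+ p. ennreal ((dist ((h \<circ> Y k) p) ((h \<circ> Z) p))^2) \<partial>\<Lambda>)
        \<le> ennreal ((mnorm K)^2) * (\<integral>\<^sup>+ p. ennreal ((dist (Y k p) (Z p))^2) \<partial>\<Lambda>)" for k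
    proof -
      have "(\<integral>\<^sup>+ p. ennreal ((dist ((h \<circ> Y k) p) ((h \<circ> Z) p))^2) \<partial>\<Lambda>)
          \<le> (\<integral>\<^sup>+ p. ennreal ((mnorm K)^2) * ennreal ((dist (Y k p) (Z p))^2) \<partial>\<Lambda>)"
      proof (rule nn_integral_mono)
        fix p
        have "dist ((h \<circ> Y k) p) ((h \<circ> Z) p) = norm (K *v (Y k p - Z p))"
          by (simp add: h_def dist_norm matrix_vector_mult_diff_distrib)
        also have "\<dots> \<le> mnorm K * dist (Y k p) (Z p)" unfolding dist_norm by (rule norm_mv_le)
        finally have "(dist ((h \<circ> Y k) p) ((h \<circ> Z) p))^2 \<le> (mnorm K * dist (Y k p) (Z p))^2"
          by (intro power_mono) auto
        then show "ennreal ((dist ((h \<circ> Y k) p) ((h \<circ> Z) p))^2) \<le> ennreal ((mnorm K)^2) * ennreal ((dist (Y k p) (Z p))^2)"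
          by (simp add: ennreal_mult[symmetric] power_mult_distrib ennreal_leI)
      qed
      also have "\<dots> = ennreal ((mnorm K)^2) * (\<integral>\<^sup>+ p. ennreal ((dist (Y k p) (Z p))^2) \<partial>\<Lambda>)"
        by (rule nn_integral_cmult) (use Ym Zm in measurable)
      finally show ?thesis .
    qed
    have lim0: "(\<lambda>k. ennreal ((mnorm K)^2) * (\<integral>\<^sup>+ p. ennreal ((dist (Y k p) (Z p))^2) \<partial>\<Lambda>)) \<longlonglongrightarrow> 0"
      using ennreal_tendsto_cmult[OF _ l2Y, of "ennreal ((mnorm K)^2)"] by simp
    show "(\<lambda>k. \<integral>\<^sup>+ p. ennreal ((dist ((h \<circ> Y k) p) ((h \<circ> Z) p))^2) \<partial>\<Lambda>) \<longlonglongrightarrow> 0"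
      by (rule tendsto_sandwich[OF _ _ tendsto_const lim0]) (simp, rule always_eventually, rule allI, rule bnd)
  qed
  have part1: "weak_conv_law (\<lambda>k. distr M borel (Xd k)) (distr M borel Xs)
       \<and> weak_conv_law (\<lambda>k. distr M borel (Ud k)) (distr M borel Us)
       \<and> W2_conv_law (\<lambda>k. distr M borel (Xd k)) (distr M borel Xs)
       \<and> W2_conv_law (\<lambda>k. distr M borel (Ud k)) (distr M borel Us)"
    using convX convU by (simp add: lawXd lawXs2 lawUd lawUs)
  have SMi: "integrable M (\<lambda>\<omega>. L.SS (L.Wseq \<omega>))" and SM0: "(\<integral>\<omega>. L.SS (L.Wseq \<omega>) \<partial>M) = 0"
    using L.SM_int_zero by auto
  have mean: "mean_law (distr M borel Xs) = L.cc"
  proof -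
    have "mean_law (distr M borel Xs) = (\<integral>\<omega>. Xs \<omega> \<partial>M)"
      unfolding mean_law_def by (rule integral_distr[OF Xsm]) simp
    also have "\<dots> = (\<integral>\<omega>. L.cc + L.SS (L.Wseq \<omega>) \<partial>M)" by (simp add: Xs_eq')
    also have "\<dots> = (\<integral>\<omega>. L.cc \<partial>M) + (\<integral>\<omega>. L.SS (L.Wseq \<omega>) \<partial>M)"
      by (rule Bochner_Integration.integral_add[OF integrable_const SMi])
    also have "\<dots> = L.cc" by (simp add: SM0 prob_space)
    finally show ?thesis .
  qed
  have cc_eq: "L.cc = matrix_inv (mat 1 - At) ** Ft *v (\<integral>\<omega>'. W 0 \<omega>' \<partial>M)"
    by (simp add: L.cc_def L.Minv_def Lm m_def)
  have Mj_eq: "L.Mj j = matpow At j ** E ** cov_law (distr M borel (W 0)) ** transpose E ** transpose (matpow At j)" for j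
    by (simp add: L.Mj_def L.\<mu>W_def)
  have sums: "(\<lambda>j. matpow At j ** E ** cov_law (distr M borel (W 0)) ** transpose E ** transpose (matpow At j))
      sums (\<chi> a c. \<integral>\<omega>. L.SS (L.Wseq \<omega>) $ a * L.SS (L.Wseq \<omega>) $ c \<partial>M)"
    using L.Mj_sums unfolding Mj_eq .
  have cov: "cov_law (distr M borel Xs) = (\<chi> a c. \<integral>\<omega>. L.SS (L.Wseq \<omega>) $ a * L.SS (L.Wseq \<omega>) $ c \<partial>M)"
    unfolding cov_law_def mean
  proof (intro arg_cong[where f=vec_lambda] ext)
    fix a c
    show "(\<integral>x. (x $ a - L.cc $ a) * (x $ c - L.cc $ c) \<partial>distr M borel Xs)
        = (\<integral>\<omega>. L.SS (L.Wseq \<omega>) $ a * L.SS (L.Wseq \<omega>) $ c \<partial>M)"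
      by (subst integral_distr[OF Xsm]) (simp_all add: Xs_eq')
  qed
  have Xs_sq: "integrable M (\<lambda>\<omega>. (norm (Xs \<omega>))\<^sup>2)"
  proof (rule Bochner_Integration.integrable_bound[of _ "\<lambda>\<omega>. 2 * (norm L.cc)^2 + 2 * L.Dd \<omega>"])
    show "integrable M (\<lambda>\<omega>. 2 * (norm L.cc)^2 + 2 * L.Dd \<omega>)"
      using L.Dd_int by simp
    show "AE \<omega> in M. norm ((norm (Xs \<omega>))\<^sup>2) \<le> norm (2 * (norm L.cc)^2 + 2 * L.Dd \<omega>)"
      using L.AE_goodM
    proof (rule AE_mp, intro AE_I2 impI)
      fix \<omega> assume g: "L.good (L.Wseq \<omega>)"
      have sm: "summable (\<lambda>j. L.b j * norm (W j \<omega> - L.m))" using g by (simp add: L.good_def L.Wseq_def)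
      have s0: "0 \<le> (\<Sum>j. L.b j * norm (W j \<omega> - L.m))" by (intro suminf_nonneg sm) (simp add: L.b_nonneg)
      have "norm (L.SS (L.Wseq \<omega>)) \<le> (\<Sum>j. L.b (j + 0) * norm (L.Wseq \<omega> (j + 0) - L.m))"
        using L.good_tail[OF g, of 0] by simp
      then have nS: "norm (L.SS (L.Wseq \<omega>)) \<le> (\<Sum>j. L.b j * norm (W j \<omega> - L.m))"
        by (simp add: L.Wseq_def)
      have "norm (Xs \<omega>) \<le> norm L.cc + norm (L.SS (L.Wseq \<omega>))"
        unfolding Xs_eq' by (rule norm_triangle_ineq)
      then have "(norm (Xs \<omega>))^2 \<le> (norm L.cc + norm (L.SS (L.Wseq \<omega>)))^2"
        by (intro power_mono) auto
      also have "\<dots> \<le> 2 * (norm L.cc)^2 + 2 * (norm (L.SS (L.Wseq \<omega>)))^2"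
        using zero_le_power2[of "norm L.cc - norm (L.SS (L.Wseq \<omega>))"] unfolding power2_sum power2_diff by linarith
      also have "(norm (L.SS (L.Wseq \<omega>)))^2 \<le> L.Dd \<omega>"
        unfolding L.Dd_def by (intro power_mono nS) simp
      finally show "norm ((norm (Xs \<omega>))\<^sup>2) \<le> norm (2 * (norm L.cc)^2 + 2 * L.Dd \<omega>)"
        using L.Dd_def by simp
    qed
  qed measurable
  have stat: "\<forall>(N :: 'b measure) (Xb :: 'b \<Rightarrow> real^'nx).
            prob_space N \<and> Xb \<in> borel_measurable N \<and> distr N borel Xb = distr M borel Xs \<longrightarrow>
            stationary_pair A B E (distr M borel (W 0)) N Xb
              (\<lambda>\<omega>. K *v Xb \<omega> + F *v (\<integral>\<omega>'. W 0 \<omega>' \<partial>M))"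
  proof (intro allI impI, elim conjE)
    fix N :: "'b measure" and Xb :: "'b \<Rightarrow> real^'nx"
    assume N: "prob_space N" and Xbm[measurable]: "Xb \<in> borel_measurable N" and law: "distr N borel Xb = distr M borel Xs"
    interpret NN: prob_space N by (rule N)
    have sqX: "integrable N (\<lambda>\<omega>. (norm (Xb \<omega>))\<^sup>2)"
    proof -
      have "integrable (distr N borel Xb) (\<lambda>x. (norm x)\<^sup>2)"
        unfolding law by (subst integrable_distr_eq) (use Xs_sq in auto)
      then show ?thesis by (subst (asm) integrable_distr_eq) auto
    qed
    have sqU: "integrable N (\<lambda>\<omega>. (norm (K *v Xb \<omega> + F *v m))\<^sup>2)"
    proof (rule Bochner_Integration.integrable_bound[of _ "\<lambda>\<omega>. 2 * (mnorm K)^2 * (norm (Xb \<omega>))\<^sup>2 + 2 * (norm (F *v m))^2"])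
      show "integrable N (\<lambda>\<omega>. 2 * (mnorm K)^2 * (norm (Xb \<omega>))\<^sup>2 + 2 * (norm (F *v m))^2)"
        using sqX by simp
      show "AE \<omega> in N. norm ((norm (K *v Xb \<omega> + F *v m))\<^sup>2) \<le> norm (2 * (mnorm K)^2 * (norm (Xb \<omega>))\<^sup>2 + 2 * (norm (F *v m))^2)"
      proof (rule AE_I2)
        fix \<omega>
        have n1: "norm (K *v Xb \<omega>) \<le> mnorm K * norm (Xb \<omega>)" by (rule norm_mv_le)
        have "norm (K *v Xb \<omega> + F *v m) \<le> norm (K *v Xb \<omega>) + norm (F *v m)" by (rule norm_triangle_ineq)
        then have "(norm (K *v Xb \<omega> + F *v m))^2 \<le> (norm (K *v Xb \<omega>) + norm (F *v m))^2"
          by (intro power_mono) auto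
        also have "\<dots> \<le> 2 * (norm (K *v Xb \<omega>))^2 + 2 * (norm (F *v m))^2"
          using zero_le_power2[of "norm (K *v Xb \<omega>) - norm (F *v m)"] unfolding power2_sum power2_diff by linarith
        also have "(norm (K *v Xb \<omega>))^2 \<le> (mnorm K * norm (Xb \<omega>))^2"
          by (intro power_mono n1) simp
        finally show "norm ((norm (K *v Xb \<omega> + F *v m))\<^sup>2) \<le> norm (2 * (mnorm K)^2 * (norm (Xb \<omega>))\<^sup>2 + 2 * (norm (F *v m))^2)"
          by (simp add: power_mult_distrib)
      qed
    qed measurable
    have core: "distr N borel Xb = distr (N \<Otimes>\<^sub>M L.\<mu>W) borel (\<lambda>(\<omega>, w). At *v Xb \<omega> + Ft *v L.m + E *v (w - L.m))"
      by (rule L.stationary_core[OF N Xbm]) (simp add: law lawXs)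
    show "stationary_pair A B E (distr M borel (W 0)) N Xb (\<lambda>\<omega>. K *v Xb \<omega> + F *v (\<integral>\<omega>'. W 0 \<omega>' \<partial>M))"
      unfolding stationary_pair_def
    proof (intro conjI)
      show "Xb \<in> borel_measurable N" by (rule Xbm)
      show "(\<lambda>\<omega>. K *v Xb \<omega> + F *v (\<integral>\<omega>'. W 0 \<omega>' \<partial>M)) \<in> borel_measurable N" by measurable
      show "integrable N (\<lambda>\<omega>. (norm (Xb \<omega>))\<^sup>2)" by (rule sqX)
      show "integrable N (\<lambda>\<omega>. (norm (K *v Xb \<omega> + F *v (\<integral>\<omega>'. W 0 \<omega>' \<partial>M)))\<^sup>2)"
        using sqU by (simp add: m_def)
      show "distr N borel Xb = distr (N \<Otimes>\<^sub>M distr M borel (W 0)) borel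
          (\<lambda>(\<omega>, w). A *v Xb \<omega> + B *v (K *v Xb \<omega> + F *v (\<integral>\<omega>'. W 0 \<omega>' \<partial>M)) + E *v w)"
        using core by (simp add: L.\<mu>W_def Lm alg[unfolded m_def] m_def)
    qed
  qed
  show ?thesis
    using part1 mean cc_eq sums cov stat by (auto simp: sums_iff)
qed

end
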